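(* In the setting described in the context, suppose sequential ignorability, the overlap condition and correct specification hold. Then the backward-induction DTR $\pi^{*,B}=(\pi_1^{*,B},\dots,\pi_T^{*,B})$ is optimal over $\Pi$: $W(\pi^{*,B})\ge W(\pi)$ for all $\pi\in\Pi$.
   Context: Fix $T\ge1$; $\mathcal{A}_t=\{0,\dots,d_t-1\}$, $d_t\ge2$; $\underline v_t=(v_1,\dots,v_t)$, $\underline{\mathcal{A}}_t=\mathcal{A}_1\times\cdots\times\mathcal{A}_t$. Potential outcomes $Y_t(\underline a_t)$, potential states $S_t(\underline a_{t-1})$ ($S_1$ pre-treatment); observed $A_t$, $S_t=S_t(\underline A_{t-1})$, $Y_t=Y_t(\underline A_t)$; potential history $H_t(\underline a_{t-1})=(\underline a_{t-1},S_1,S_2(\underline a_1),\dots,S_t(\underline a_{t-1}))$, observed history $H_t=H_t(\underline A_{t-1})$ with support $\mathcal{H}_t$. $e_t(h_t,a_t)=\mathbb{P}(A_t=a_t\mid H_t=h_t)$. A stage-$t$ policy is measurable $\pi_t:\mathcal{H}_t\to\mathcal{A}_t$; DTR $\pi=(\pi_1,\dots,\pi_T)$; class $\Pi=\Pi_1\times\cdots\times\Pi_T$, $\Pi_{s:t}=\Pi_s\times\cdots\times\Pi_t$, $\pi_{s:t}=(\pi_s,\dots,\pi_t)$. Welfare $W(\pi)=\mathbb{E}[\sum_{t=1}^T\sum_{\underline a_t\in\underline{\mathcal{A}}_t}Y_t(\underline a_t)\prod_{s=1}^t\mathbf{1}\{\pi_s(H_s(\underline a_{s-1}))=a_s\}]$.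 Write $f(h,\pi_t)=f(h,\pi_t(h))$. Q-functions: $Q_T(h_T,a_T)=\mathbb{E}[Y_T\mid H_T=h_T,A_T=a_T]$ (also $Q_T^{\pi_{(T+1):T}}$); for $t<T$, $Q_t^{\pi_{(t+1):T}}(h_t,a_t)=\mathbb{E}[Y_t+Q_{t+1}^{\pi_{(t+2):T}}(H_{t+1},\pi_{t+1})\mid H_t=h_t,A_t=a_t]$. Backward induction: $\pi_T^{*,B}\in\arg\max_{\pi_T\in\Pi_T}\mathbb{E}[Q_T(H_T,\pi_T)]$ and for $t=T-1,\dots,1$, $\pi_t^{*,B}\in\arg\max_{\pi_t\in\Pi_t}\mathbb{E}[Q_t^{\pi^{*,B}_{(t+1):T}}(H_t,\pi_t)]$. (Sequential ignorability) For all $t,\underline a_T$: $\{Y_t(\underline a_t),\dots,Y_T(\underline a_T),S_{t+1}(\underline a_t),\dots,S_T(\underline a_{T-1})\}\perp A_t\mid H_t$. (Overlap) There is $\eta\in(0,1)$ with $e_t(h_t,a_t)\ge\eta$ for all $t$ and $(h_t,a_t)$ such that $\pi_t(h_t)=a_t$ for some $\pi_t\in\Pi_t$. (Correct specification) There is $\pi^*_{2:T}\in\Pi_{2:T}$ with $Q_t^{\pi^*_{(t+1):T}}(H_t,\pi_t^* )\ge\sup_{\pi_t\in\Pi_t}Q_t^{\pi^*_{(t+1):T}}(H_t,\pi_t)$ a.s. for all $t=2,\dots,T$. *)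

theory Defs
  imports "HOL-Probability.Probability"
begin

text \<open>Histories at stage t are pairs (past actions, states):
  the first component is an extensional function on {1..<t} (actions a_1..a_{t-1}),
  the second an extensional function on {1..t} (states S_1..S_t).
  Action sequences (a_1,...,a_t) are lists of length t, a_s = as ! (s-1).\<close>

type_synonym 's hist = "(nat \<Rightarrow> nat) \<times> (nat \<Rightarrow> 's)"

definition act_seqs :: "(nat \<Rightarrow> nat) \<Rightarrow> nat \<Rightarrow> nat list set" where
  "act_seqs d t = {as. length as = t \<and> (\<forall>i<t. as ! i < d (Suc i))}"

definition HM :: "'s measure \<Rightarrow> nat \<Rightarrow> 's hist measure" where
  "HM SM t = PiM {1..<t} (\<lambda>_. count_space UNIV) \<Otimes>\<^sub>M PiM {1..t} (\<lambda>_. SM)"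

definition pot_hist :: "(nat \<Rightarrow> nat list \<Rightarrow> 'w \<Rightarrow> 's) \<Rightarrow> nat \<Rightarrow> nat list \<Rightarrow> 'w \<Rightarrow> 's hist" where
  "pot_hist S t as \<omega> = ((\<lambda>i\<in>{1..<t}. as ! (i - 1)), (\<lambda>i\<in>{1..t}. S i (take (i - 1) as) \<omega>))"

definition obs_acts :: "(nat \<Rightarrow> 'w \<Rightarrow> nat) \<Rightarrow> nat \<Rightarrow> 'w \<Rightarrow> nat list" where
  "obs_acts A t \<omega> = map (\<lambda>s. A s \<omega>) [1..<Suc t]"

definition obs_hist :: "(nat \<Rightarrow> nat list \<Rightarrow> 'w \<Rightarrow> 's) \<Rightarrow> (nat \<Rightarrow> 'w \<Rightarrow> nat) \<Rightarrow> nat \<Rightarrow> 'w \<Rightarrow> 's hist" where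
  "obs_hist S A t \<omega> = pot_hist S t (obs_acts A (t - 1) \<omega>) \<omega>"

definition obs_Y :: "(nat \<Rightarrow> nat list \<Rightarrow> 'w \<Rightarrow> real) \<Rightarrow> (nat \<Rightarrow> 'w \<Rightarrow> nat) \<Rightarrow> nat \<Rightarrow> 'w \<Rightarrow> real" where
  "obs_Y Y A t \<omega> = Y t (obs_acts A t \<omega>) \<omega>"

definition policy :: "'s measure \<Rightarrow> (nat \<Rightarrow> nat) \<Rightarrow> nat \<Rightarrow> ('s hist \<Rightarrow> nat) \<Rightarrow> bool" where
  "policy SM d t p \<longleftrightarrow> p \<in> measurable (HM SM t) (count_space UNIV) \<and> (\<forall>h\<in>space (HM SM t). p h < d t)"

definition H_alg :: "'w measure \<Rightarrow> 's measure \<Rightarrow> (nat \<Rightarrow> nat list \<Rightarrow> 'w \<Rightarrow> 's) \<Rightarrow> (nat \<Rightarrow> 'w \<Rightarrow> nat) \<Rightarrow> nat \<Rightarrow> 'w measure" where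
  "H_alg M SM S A t = vimage_algebra (space M) (obs_hist S A t) (HM SM t)"

definition HA_alg :: "'w measure \<Rightarrow> 's measure \<Rightarrow> (nat \<Rightarrow> nat list \<Rightarrow> 'w \<Rightarrow> 's) \<Rightarrow> (nat \<Rightarrow> 'w \<Rightarrow> nat) \<Rightarrow> nat \<Rightarrow> 'w measure" where
  "HA_alg M SM S A t = vimage_algebra (space M) (\<lambda>\<omega>. (obs_hist S A t \<omega>, A t \<omega>)) (HM SM t \<Otimes>\<^sub>M count_space UNIV)"

definition is_Q_version :: "'w measure \<Rightarrow> 's measure \<Rightarrow> (nat \<Rightarrow> nat list \<Rightarrow> 'w \<Rightarrow> 's) \<Rightarrow> (nat \<Rightarrow> 'w \<Rightarrow> nat)
    \<Rightarrow> nat \<Rightarrow> ('w \<Rightarrow> real) \<Rightarrow> ('s hist \<times> nat \<Rightarrow> real) \<Rightarrow> bool" where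
  "is_Q_version M SM S A t Z q \<longleftrightarrow>
     q \<in> borel_measurable (HM SM t \<Otimes>\<^sub>M count_space UNIV) \<and>
     (AE \<omega> in M. q (obs_hist S A t \<omega>, A t \<omega>) = real_cond_exp M (HA_alg M SM S A t) Z \<omega>)"

definition Q_family :: "'w measure \<Rightarrow> 's measure \<Rightarrow> (nat \<Rightarrow> nat list \<Rightarrow> 'w \<Rightarrow> real) \<Rightarrow> (nat \<Rightarrow> nat list \<Rightarrow> 'w \<Rightarrow> 's)
    \<Rightarrow> (nat \<Rightarrow> 'w \<Rightarrow> nat) \<Rightarrow> nat \<Rightarrow> (nat \<Rightarrow> 's hist \<Rightarrow> nat) \<Rightarrow> (nat \<Rightarrow> 's hist \<times> nat \<Rightarrow> real) \<Rightarrow> bool" where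
  "Q_family M SM Y S A T \<pi> Q \<longleftrightarrow>
     (\<forall>t\<in>{1..T}. is_Q_version M SM S A t
        (if t = T then obs_Y Y A T
         else (\<lambda>\<omega>. obs_Y Y A t \<omega> + Q (Suc t) (obs_hist S A (Suc t) \<omega>, \<pi> (Suc t) (obs_hist S A (Suc t) \<omega>))))
        (Q t))"

definition welfare :: "'w measure \<Rightarrow> (nat \<Rightarrow> nat) \<Rightarrow> (nat \<Rightarrow> nat list \<Rightarrow> 'w \<Rightarrow> real) \<Rightarrow> (nat \<Rightarrow> nat list \<Rightarrow> 'w \<Rightarrow> 's)
    \<Rightarrow> nat \<Rightarrow> (nat \<Rightarrow> 's hist \<Rightarrow> nat) \<Rightarrow> real" where
  "welfare M d Y S T \<pi> =
     (\<integral>\<omega>. (\<Sum>t\<in>{1..T}. \<Sum>as\<in>act_seqs d t.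
        Y t as \<omega> * (\<Prod>s\<in>{1..t}. if \<pi> s (pot_hist S s (take (s - 1) as) \<omega>) = as ! (s - 1) then 1 else 0)) \<partial>M)"

definition cond_indep :: "'w measure \<Rightarrow> 'w measure \<Rightarrow> 'w measure \<Rightarrow> 'w measure \<Rightarrow> bool" where
  "cond_indep M G F1 F2 \<longleftrightarrow>
     (\<forall>E1\<in>sets F1. \<forall>E2\<in>sets F2. AE \<omega> in M.
        real_cond_exp M G (indicator (E1 \<inter> E2)) \<omega> =
        real_cond_exp M G (indicator E1) \<omega> * real_cond_exp M G (indicator E2) \<omega>)"

definition pot_vec :: "(nat \<Rightarrow> nat list \<Rightarrow> 'w \<Rightarrow> real) \<Rightarrow> (nat \<Rightarrow> nat list \<Rightarrow> 'w \<Rightarrow> 's) \<Rightarrow> nat \<Rightarrow> nat \<Rightarrow> nat list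
    \<Rightarrow> 'w \<Rightarrow> (nat \<Rightarrow> real) \<times> (nat \<Rightarrow> 's)" where
  "pot_vec Y S T t as \<omega> = ((\<lambda>s\<in>{t..T}. Y s (take s as) \<omega>), (\<lambda>s\<in>{t<..T}. S s (take (s - 1) as) \<omega>))"

definition seq_ignorability :: "'w measure \<Rightarrow> 's measure \<Rightarrow> (nat \<Rightarrow> nat) \<Rightarrow> (nat \<Rightarrow> nat list \<Rightarrow> 'w \<Rightarrow> real)
    \<Rightarrow> (nat \<Rightarrow> nat list \<Rightarrow> 'w \<Rightarrow> 's) \<Rightarrow> (nat \<Rightarrow> 'w \<Rightarrow> nat) \<Rightarrow> nat \<Rightarrow> bool" where
  "seq_ignorability M SM d Y S A T \<longleftrightarrow>
     (\<forall>t\<in>{1..T}. \<forall>as\<in>act_seqs d T.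
        cond_indep M (H_alg M SM S A t)
          (vimage_algebra (space M) (pot_vec Y S T t as)
             (PiM {t..T} (\<lambda>_. borel) \<Otimes>\<^sub>M PiM {t<..T} (\<lambda>_. SM)))
          (vimage_algebra (space M) (A t) (count_space UNIV)))"

definition overlap :: "'w measure \<Rightarrow> 's measure \<Rightarrow> (nat \<Rightarrow> nat list \<Rightarrow> 'w \<Rightarrow> 's) \<Rightarrow> (nat \<Rightarrow> 'w \<Rightarrow> nat)
    \<Rightarrow> nat \<Rightarrow> (nat \<Rightarrow> ('s hist \<Rightarrow> nat) set) \<Rightarrow> bool" where
  "overlap M SM S A T Pol \<longleftrightarrow>
     (\<exists>\<eta>::real. 0 < \<eta> \<and> \<eta> < 1 \<and>
        (\<forall>t\<in>{1..T}. \<forall>a. AE \<omega> in M.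
           (\<exists>p\<in>Pol t. p (obs_hist S A t \<omega>) = a) \<longrightarrow>
           \<eta> \<le> real_cond_exp M (H_alg M SM S A t) (indicator {x\<in>space M. A t x = a}) \<omega>))"

definition correct_spec :: "'w measure \<Rightarrow> 's measure \<Rightarrow> (nat \<Rightarrow> nat list \<Rightarrow> 'w \<Rightarrow> real) \<Rightarrow> (nat \<Rightarrow> nat list \<Rightarrow> 'w \<Rightarrow> 's)
    \<Rightarrow> (nat \<Rightarrow> 'w \<Rightarrow> nat) \<Rightarrow> nat \<Rightarrow> (nat \<Rightarrow> ('s hist \<Rightarrow> nat) set) \<Rightarrow> bool" where
  "correct_spec M SM Y S A T Pol \<longleftrightarrow>
     (\<exists>\<pi>s Qs. (\<forall>t\<in>{2..T}. \<pi>s t \<in> Pol t) \<and> Q_family M SM Y S A T \<pi>s Qs \<and>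
        (\<forall>t\<in>{2..T}. AE \<omega> in M. \<forall>p\<in>Pol t.
            Qs t (obs_hist S A t \<omega>, p (obs_hist S A t \<omega>))
              \<le> Qs t (obs_hist S A t \<omega>, \<pi>s t (obs_hist S A t \<omega>))))"

definition backward_induction :: "'w measure \<Rightarrow> 's measure \<Rightarrow> (nat \<Rightarrow> nat list \<Rightarrow> 'w \<Rightarrow> real) \<Rightarrow> (nat \<Rightarrow> nat list \<Rightarrow> 'w \<Rightarrow> 's)
    \<Rightarrow> (nat \<Rightarrow> 'w \<Rightarrow> nat) \<Rightarrow> nat \<Rightarrow> (nat \<Rightarrow> ('s hist \<Rightarrow> nat) set)
    \<Rightarrow> (nat \<Rightarrow> 's hist \<Rightarrow> nat) \<Rightarrow> (nat \<Rightarrow> 's hist \<times> nat \<Rightarrow> real) \<Rightarrow> bool" where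
  "backward_induction M SM Y S A T Pol \<pi>B QB \<longleftrightarrow>
     Q_family M SM Y S A T \<pi>B QB \<and>
     (\<forall>t\<in>{1..T}. \<pi>B t \<in> Pol t \<and>
        (\<forall>p\<in>Pol t. (\<integral>\<omega>. QB t (obs_hist S A t \<omega>, p (obs_hist S A t \<omega>)) \<partial>M)
                   \<le> (\<integral>\<omega>. QB t (obs_hist S A t \<omega>, \<pi>B t (obs_hist S A t \<omega>)) \<partial>M)))"

end

theory Submission
  imports Defs
begin

lemma obs_acts_length[simp]: "length (obs_acts A k w) = k"
  by (simp add: obs_acts_def)

lemma obs_acts_nth: "i < k \<Longrightarrow> obs_acts A k w ! i = A (Suc i) w"
  by (simp add: obs_acts_def del: upt_Suc)

lemma take_obs_acts: "j \<le> k \<Longrightarrow> take j (obs_acts A k w) = obs_acts A j w"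
  by (rule nth_equalityI) (auto simp: obs_acts_nth)

lemma obs_hist_eq: "obs_hist S A t w = ((\<lambda>i\<in>{1..<t}. A i w), (\<lambda>i\<in>{1..t}. S i (obs_acts A (i - 1) w) w))"
  unfolding obs_hist_def pot_hist_def
  by (auto simp: obs_acts_nth take_obs_acts intro!: ext)

lemma finite_act_seqs: "finite (act_seqs d k)"
proof -
  have "act_seqs d k \<subseteq> {xs. set xs \<subseteq> {..<(\<Sum>i\<le>k. d i)} \<and> length xs = k}"
  proof
    fix xs assume "xs \<in> act_seqs d k"
    then have l: "length xs = k" and b: "\<forall>i<k. xs ! i < d (Suc i)" by (auto simp: act_seqs_def)
    have "set xs \<subseteq> {..<(\<Sum>i\<le>k. d i)}"
    proof
      fix x assume "x \<in> set xs"
      then obtain i where i: "i < k" "xs ! i = x" using l by (auto simp: in_set_conv_nth)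
      have "d (Suc i) \<le> (\<Sum>i\<le>k. d i)" using i by (intro member_le_sum) auto
      then show "x \<in> {..<(\<Sum>i\<le>k. d i)}" using b i by auto
    qed
    then show "xs \<in> {xs. set xs \<subseteq> {..<(\<Sum>i\<le>k. d i)} \<and> length xs = k}" using l by auto
  qed
  then show ?thesis by (rule finite_subset) (rule finite_lists_length_eq, simp)
qed

lemma act_seqs_take: "as \<in> act_seqs d k \<Longrightarrow> j \<le> k \<Longrightarrow> take j as \<in> act_seqs d j"
  by (auto simp: act_seqs_def)

lemma measurable_sub:
  assumes "f \<in> measurable F N" "sets F \<subseteq> sets G" "space F = space G"
  shows "f \<in> measurable G N"
  using assms unfolding measurable_def by auto

locale dtr =
  fixes M :: "'w measure" and SM :: "'s measure" and T :: nat and d :: "nat \<Rightarrow> nat"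
    and Y :: "nat \<Rightarrow> nat list \<Rightarrow> 'w \<Rightarrow> real"
    and S :: "nat \<Rightarrow> nat list \<Rightarrow> 'w \<Rightarrow> 's"
    and A :: "nat \<Rightarrow> 'w \<Rightarrow> nat"
    and Pol :: "nat \<Rightarrow> ('s hist \<Rightarrow> nat) set"
    and \<eta> :: real
  assumes prob: "prob_space M"
    and T1: "1 \<le> T"
    and Ameas: "\<And>t. t \<in> {1..T} \<Longrightarrow> A t \<in> measurable M (count_space UNIV)"
    and Abnd: "\<And>t w. t \<in> {1..T} \<Longrightarrow> w \<in> space M \<Longrightarrow> A t w < d t"
    and Smeas: "\<And>t as. t \<in> {1..T} \<Longrightarrow> as \<in> act_seqs d (t - 1) \<Longrightarrow> S t as \<in> measurable M SM"
    and Yint: "\<And>t as. t \<in> {1..T} \<Longrightarrow> as \<in> act_seqs d t \<Longrightarrow> integrable M (Y t as)"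
    and PolP: "\<And>t. t \<in> {1..T} \<Longrightarrow> Pol t \<subseteq> {p. policy SM d t p}"
    and eta: "0 < \<eta>"
    and ovl: "\<And>t a. t \<in> {1..T} \<Longrightarrow> AE w in M. (\<exists>p\<in>Pol t. p (obs_hist S A t w) = a) \<longrightarrow>
           \<eta> \<le> real_cond_exp M (H_alg M SM S A t) (indicator {x\<in>space M. A t x = a}) w"
    and si: "seq_ignorability M SM d Y S A T"
begin

sublocale prob_space M by (rule prob)

abbreviation "H t \<equiv> obs_hist S A t"
abbreviation "HA t \<equiv> H_alg M SM S A t"
abbreviation "HAA t \<equiv> HA_alg M SM S A t"
abbreviation "e t a \<equiv> real_cond_exp M (HA t) (indicator {x\<in>space M. A t x = a})"

lemma obs_acts_in: "k \<le> T \<Longrightarrow> w \<in> space M \<Longrightarrow> obs_acts A k w \<in> act_seqs d k"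
  unfolding act_seqs_def using Abnd by (auto simp: obs_acts_nth)

lemma obs_acts_meas: "k \<le> T \<Longrightarrow> obs_acts A k \<in> measurable M (count_space (act_seqs d k))"
proof -
  assume k: "k \<le> T"
  have c: "countable (act_seqs d k)" by (rule countable_finite[OF finite_act_seqs])
  show ?thesis
    unfolding measurable_count_space_eq_countable[OF c]
  proof safe
    fix w assume "w \<in> space M" then show "obs_acts A k w \<in> act_seqs d k" using obs_acts_in k by auto
  next
    fix as assume as: "as \<in> act_seqs d k"
    have "obs_acts A k -` {as} \<inter> space M = {w \<in> space M. \<forall>i. i < k \<longrightarrow> A (Suc i) w = as ! i}"
    proof (intro equalityI subsetI)
      fix w assume "w \<in> obs_acts A k -` {as} \<inter> space M"
      then show "w \<in> {w \<in> space M. \<forall>i. i < k \<longrightarrow> A (Suc i) w = as ! i}"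
        by (auto simp: obs_acts_nth[symmetric])
    next
      fix w assume w: "w \<in> {w \<in> space M. \<forall>i. i < k \<longrightarrow> A (Suc i) w = as ! i}"
      have "obs_acts A k w = as"
        using as w by (intro nth_equalityI) (auto simp: act_seqs_def obs_acts_nth)
      then show "w \<in> obs_acts A k -` {as} \<inter> space M" using w by auto
    qed
    also have "\<dots> \<in> sets M"
    proof (rule sets.sets_Collect_countable_All)
      fix i :: nat
      show "{w \<in> space M. i < k \<longrightarrow> A (Suc i) w = as ! i} \<in> sets M"
      proof (cases "i < k")
        case True
        then have "A (Suc i) \<in> measurable M (count_space UNIV)" using k by (intro Ameas) auto
        then have "A (Suc i) -` {as ! i} \<inter> space M \<in> sets M" by (rule measurable_sets) simp
        moreover have "{w \<in> space M. i < k \<longrightarrow> A (Suc i) w = as ! i} = A (Suc i) -` {as ! i} \<inter> space M"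
          using True by auto
        ultimately show ?thesis by simp
      qed simp
    qed
    finally show "obs_acts A k -` {as} \<inter> space M \<in> sets M" .
  qed
qed


lemma obs_hist_fun: "H t = (\<lambda>w. ((\<lambda>i\<in>{1..<t}. A i w), (\<lambda>i\<in>{1..t}. S i (obs_acts A (i - 1) w) w)))"
  by (rule ext) (rule obs_hist_eq)

lemma H_meas: "t \<le> T \<Longrightarrow> H t \<in> measurable M (HM SM t)"
  unfolding obs_hist_fun HM_def
proof (intro measurable_Pair measurable_restrict)
  fix i assume "t \<le> T" "i \<in> {1..<t}"
  then show "A i \<in> measurable M (count_space UNIV)" by (intro Ameas) auto
next
  fix i assume t: "t \<le> T" and i: "i \<in> {1..t}"
  show "(\<lambda>w. S i (obs_acts A (i - 1) w) w) \<in> measurable M SM"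
  proof (rule measurable_compose_countable'[where I="act_seqs d (i - 1)"])
    fix as assume "as \<in> act_seqs d (i - 1)"
    then show "S i as \<in> measurable M SM" using t i by (intro Smeas) auto
  next
    show "obs_acts A (i - 1) \<in> measurable M (count_space (act_seqs d (i - 1)))"
      using t i by (intro obs_acts_meas) auto
  qed (rule countable_finite[OF finite_act_seqs])
qed

lemma pot_hist_meas:
  assumes "t \<le> T" "as \<in> act_seqs d (t - 1)"
  shows "pot_hist S t as \<in> measurable M (HM SM t)"
proof -
  have "pot_hist S t as = (\<lambda>w. ((\<lambda>i\<in>{1..<t}. as ! (i - 1)), (\<lambda>i\<in>{1..t}. S i (take (i - 1) as) w)))"
    by (auto simp: pot_hist_def fun_eq_iff)
  also have "\<dots> \<in> measurable M (HM SM t)"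
    unfolding HM_def
  proof (rule measurable_Pair)
    show "(\<lambda>w. \<lambda>i\<in>{1..<t}. as ! (i - 1)) \<in> measurable M (Pi\<^sub>M {1..<t} (\<lambda>_. count_space UNIV))"
      by (rule measurable_const) (simp add: space_PiM)
  next
    show "(\<lambda>w. \<lambda>i\<in>{1..t}. S i (take (i - 1) as) w) \<in> measurable M (Pi\<^sub>M {1..t} (\<lambda>_. SM))"
    proof (rule measurable_restrict)
      fix i assume i: "i \<in> {1..t}"
      then show "S i (take (i - 1) as) \<in> measurable M SM"
        using assms by (intro Smeas act_seqs_take[of _ _ "t - 1"]) auto
    qed
  qed
  finally show ?thesis .
qed

lemma HA_sub: assumes "t \<le> T" shows "subalgebra M (HA t)"
  unfolding H_alg_def subalgebra_def
  using sets_image_in_sets[of M "space M" "H t" "HM SM t"] H_meas[OF assms] by auto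

lemma HAA_pair_meas: "t \<in> {1..T} \<Longrightarrow> (\<lambda>w. (H t w, A t w)) \<in> measurable M (HM SM t \<Otimes>\<^sub>M count_space UNIV)"
  by (intro measurable_Pair H_meas Ameas) auto

lemma HAA_sub: assumes "t \<in> {1..T}" shows "subalgebra M (HAA t)"
  unfolding HA_alg_def subalgebra_def
  using sets_image_in_sets[OF _ HAA_pair_meas[OF assms]] by auto

lemma fm: "finite_measure M" by unfold_locales

lemma HA_sf: "t \<le> T \<Longrightarrow> sigma_finite_subalgebra M (HA t)"
  by (intro finite_measure_subalgebra_is_sigma_finite finite_measure_subalgebra.intro
      finite_measure_subalgebra_axioms.intro fm HA_sub)

lemma HAA_sf: "t \<in> {1..T} \<Longrightarrow> sigma_finite_subalgebra M (HAA t)"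
  by (intro finite_measure_subalgebra_is_sigma_finite finite_measure_subalgebra.intro
      finite_measure_subalgebra_axioms.intro fm HAA_sub)

lemma H_meas_HA: assumes "t \<le> T" shows "H t \<in> measurable (HA t) (HM SM t)"
  unfolding H_alg_def by (intro measurable_vimage_algebra1) (use measurable_space[OF H_meas[OF assms]] in auto)

lemma pair_meas_HAA: assumes "t \<in> {1..T}" shows "(\<lambda>w. (H t w, A t w)) \<in> measurable (HAA t) (HM SM t \<Otimes>\<^sub>M count_space UNIV)"
  unfolding HA_alg_def by (intro measurable_vimage_algebra1) (use measurable_space[OF HAA_pair_meas[OF assms]] in auto)

lemma A_meas_HAA: assumes "t \<in> {1..T}" shows "A t \<in> measurable (HAA t) (count_space UNIV)"
  using measurable_compose[OF pair_meas_HAA[OF assms] measurable_snd] by simp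

lemma H_meas_HAA: assumes "t \<in> {1..T}" shows "H t \<in> measurable (HAA t) (HM SM t)"
  using measurable_compose[OF pair_meas_HAA[OF assms] measurable_fst] by simp

lemma HA_HAA_sets: assumes "t \<in> {1..T}" shows "sets (HA t) \<subseteq> sets (HAA t)"
proof -
  have "H t \<in> measurable (HAA t) (HM SM t)" by (rule H_meas_HAA[OF assms])
  then have "sets (vimage_algebra (space (HAA t)) (H t) (HM SM t)) \<subseteq> sets (HAA t)"
    by (rule sets_image_in_sets[OF refl])
  then show ?thesis by (simp add: H_alg_def HA_alg_def)
qed

lemma HA_to_HAA: "t \<in> {1..T} \<Longrightarrow> f \<in> measurable (HA t) N \<Longrightarrow> f \<in> measurable (HAA t) N"
  by (rule measurable_sub[OF _ HA_HAA_sets]) (auto simp: H_alg_def HA_alg_def)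

lemma HA_to_M: "t \<le> T \<Longrightarrow> f \<in> measurable (HA t) N \<Longrightarrow> f \<in> measurable M N"
  by (rule measurable_from_subalg[OF HA_sub])

lemma HAA_to_M: "t \<in> {1..T} \<Longrightarrow> f \<in> measurable (HAA t) N \<Longrightarrow> f \<in> measurable M N"
  by (rule measurable_from_subalg[OF HAA_sub])

lemma H_proj: "s \<le> t \<Longrightarrow> H s w = (restrict (fst (H t w)) {1..<s}, restrict (snd (H t w)) {1..s})"
  by (auto simp: obs_hist_eq fun_eq_iff)

lemma proj_meas: "s \<le> t \<Longrightarrow> (\<lambda>x. (restrict (fst x) {1..<s}, restrict (snd x) {1..s})) \<in> measurable (HM SM t) (HM SM s)"
  unfolding HM_def
  by (intro measurable_Pair measurable_restrict measurable_compose[OF measurable_fst measurable_component_singleton]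
      measurable_compose[OF measurable_snd measurable_component_singleton]) auto

lemma Hs_meas_HA: "s \<le> t \<Longrightarrow> t \<le> T \<Longrightarrow> H s \<in> measurable (HA t) (HM SM s)"
proof -
  assume st: "s \<le> t" "t \<le> T"
  have "(\<lambda>w. (\<lambda>x. (restrict (fst x) {1..<s}, restrict (snd x) {1..s})) (H t w)) \<in> measurable (HA t) (HM SM s)"
    by (rule measurable_compose[OF H_meas_HA proj_meas]) (use st in auto)
  moreover have "(\<lambda>w. (\<lambda>x. (restrict (fst x) {1..<s}, restrict (snd x) {1..s})) (H t w)) = H s"
    using H_proj[OF st(1)] by auto
  ultimately show ?thesis by simp
qed

lemma HA_mono: assumes "s \<le> t" "t \<le> T" shows "sets (HA s) \<subseteq> sets (HA t)"
proof -
  have "H s \<in> measurable (HA t) (HM SM s)" by (rule Hs_meas_HA[OF assms])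
  then have "sets (vimage_algebra (space (HA t)) (H s) (HM SM s)) \<subseteq> sets (HA t)"
    by (rule sets_image_in_sets[OF refl])
  then show ?thesis by (simp add: H_alg_def)
qed

lemma HA_mono_meas: "s \<le> t \<Longrightarrow> t \<le> T \<Longrightarrow> f \<in> measurable (HA s) N \<Longrightarrow> f \<in> measurable (HA t) N"
  by (rule measurable_sub[OF _ HA_mono]) (auto simp: H_alg_def)

lemma As_meas_HA: "1 \<le> s \<Longrightarrow> s < t \<Longrightarrow> t \<le> T \<Longrightarrow> A s \<in> measurable (HA t) (count_space UNIV)"
proof -
  assume st: "1 \<le> s" "s < t" "t \<le> T"
  have "(\<lambda>w. (\<lambda>x. fst x s) (H t w)) \<in> measurable (HA t) (count_space UNIV)"
    by (rule measurable_compose[OF H_meas_HA]) (use st in \<open>auto simp: HM_def intro!: measurable_compose[OF measurable_fst measurable_component_singleton]\<close>)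
  moreover have "(\<lambda>w. (\<lambda>x. fst x s) (H t w)) = A s"
    using st by (auto simp: obs_hist_eq)
  ultimately show ?thesis by simp
qed

end


context dtr begin

lemma Aset_sets: "t \<in> {1..T} \<Longrightarrow> {x\<in>space M. A t x = a} \<in> sets M"
proof -
  assume t: "t \<in> {1..T}"
  have "A t -` {a} \<inter> space M \<in> sets M" by (rule measurable_sets[OF Ameas[OF t]]) simp
  moreover have "A t -` {a} \<inter> space M = {x\<in>space M. A t x = a}" by auto
  ultimately show ?thesis by simp
qed

lemma e_meas_HA: "e t a \<in> borel_measurable (HA t)" by simp
lemma e_meas: "e t a \<in> borel_measurable M" by simp

lemma key_nn:
  assumes t: "t \<in> {1..T}" and X: "X \<in> borel_measurable (HA t)"
  shows "(\<integral>\<^sup>+w. X w * ennreal (indicator {x\<in>space M. A t x = a} w) \<partial>M) = (\<integral>\<^sup>+w. X w * ennreal (e t a w) \<partial>M)"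
proof -
  interpret sf: sigma_finite_subalgebra M "HA t" by (rule HA_sf) (use t in auto)
  let ?g = "\<lambda>w. ennreal (indicator {x\<in>space M. A t x = a} w :: real)"
  have gm: "?g \<in> borel_measurable M" using Aset_sets[OF t] by measurable
  have 1: "(\<integral>\<^sup>+w. X w * nn_cond_exp M (HA t) ?g w \<partial>M) = (\<integral>\<^sup>+w. X w * ?g w \<partial>M)"
    by (rule sf.nn_cond_exp_intg[OF X gm])
  have z: "(\<lambda>w. ennreal (- indicator {x\<in>space M. A t x = a} w :: real)) = (\<lambda>w. 0)"
    by (intro ext ennreal_neg) simp
  have a0: "AE w in M. (0::ennreal) = nn_cond_exp M (HA t) (\<lambda>w. 0) w"
    by (rule sf.nn_cond_exp_F_meas) simp
  have a1: "AE w in M. (1::ennreal) = nn_cond_exp M (HA t) (\<lambda>w. 1) w"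
    by (rule sf.nn_cond_exp_F_meas) simp
  have a2: "AE w in M. nn_cond_exp M (HA t) ?g w \<le> nn_cond_exp M (HA t) (\<lambda>w. 1) w"
    by (rule sf.nn_cond_exp_mono) (use gm in \<open>auto simp: indicator_def\<close>)
  have 2: "AE w in M. nn_cond_exp M (HA t) ?g w = ennreal (e t a w)"
    using a0 a1 a2
  proof eventually_elim
    case (elim w)
    then have f: "nn_cond_exp M (HA t) ?g w < top" by (metis ennreal_one_less_top le_less_trans)
    show ?case unfolding real_cond_exp_def z using elim f
      by (simp add: ennreal_enn2real_if less_top[symmetric])
  qed
  show ?thesis
    unfolding 1[symmetric] by (rule nn_integral_cong_AE) (use 2 in auto)
qed

lemma key_real:
  assumes t: "t \<in> {1..T}" and K: "K \<in> borel_measurable (HA t)"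
    and i: "integrable M (\<lambda>w. K w * indicator {x\<in>space M. A t x = a} w)"
  shows "(\<integral>w. K w * indicator {x\<in>space M. A t x = a} w \<partial>M) = (\<integral>w. K w * e t a w \<partial>M)"
    and "integrable M (\<lambda>w. K w * e t a w)"
proof -
  interpret sf: sigma_finite_subalgebra M "HA t" by (rule HA_sf) (use t in auto)
  have gm: "(indicator {x\<in>space M. A t x = a} :: _ \<Rightarrow> real) \<in> borel_measurable M" using Aset_sets[OF t] by measurable
  show "(\<integral>w. K w * indicator {x\<in>space M. A t x = a} w \<partial>M) = (\<integral>w. K w * e t a w \<partial>M)"
    using sf.real_cond_exp_intg(2)[OF i K gm] by simp
  show "integrable M (\<lambda>w. K w * e t a w)"
    using sf.real_cond_exp_intg(1)[OF i K gm] by simp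
qed

lemma pol_meas: "t \<in> {1..T} \<Longrightarrow> p \<in> Pol t \<Longrightarrow> p \<in> measurable (HM SM t) (count_space UNIV)"
  using PolP by (auto simp: policy_def)

lemma pol_bnd: "t \<in> {1..T} \<Longrightarrow> p \<in> Pol t \<Longrightarrow> w \<in> space M \<Longrightarrow> p (H t w) < d t"
  using PolP measurable_space[OF H_meas] by (fastforce simp: policy_def)

lemma pol_H_meas_HA: "t \<in> {1..T} \<Longrightarrow> p \<in> Pol t \<Longrightarrow> (\<lambda>w. p (H t w)) \<in> measurable (HA t) (count_space UNIV)"
  by (rule measurable_compose[OF H_meas_HA pol_meas]) auto

lemma ovl_all: "t \<in> {1..T} \<Longrightarrow> AE w in M. \<forall>a. (\<exists>p\<in>Pol t. p (H t w) = a) \<longrightarrow> \<eta> \<le> e t a w"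
  by (subst AE_all_countable) (auto intro: ovl)

lemma ovl_pol: "t \<in> {1..T} \<Longrightarrow> p \<in> Pol t \<Longrightarrow> AE w in M. \<eta> \<le> e t (p (H t w)) w"
  using ovl_all by (rule AE_mp) (auto intro!: AE_I2)

lemma q_meas_HA:
  assumes "t \<le> T" "q \<in> borel_measurable (HM SM t \<Otimes>\<^sub>M count_space UNIV)"
    and "g \<in> measurable (HA t) (count_space UNIV)"
  shows "(\<lambda>w. q (H t w, g w)) \<in> borel_measurable (HA t)"
  by (rule measurable_compose[OF measurable_Pair[OF H_meas_HA] assms(2)]) (use assms in auto)

lemma q_meas_HAA:
  assumes "t \<in> {1..T}" "q \<in> borel_measurable (HM SM t \<Otimes>\<^sub>M count_space UNIV)"
  shows "(\<lambda>w. q (H t w, A t w)) \<in> borel_measurable (HAA t)"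
  by (rule measurable_compose[OF pair_meas_HAA assms(2)]) (use assms in auto)

lemma int_pol:
  assumes t: "t \<in> {1..T}" and q: "(q::'s hist \<times> nat \<Rightarrow> real) \<in> borel_measurable (HM SM t \<Otimes>\<^sub>M count_space UNIV)"
    and qi: "integrable M (\<lambda>w. q (H t w, A t w))" and p: "p \<in> Pol t"
  shows "integrable M (\<lambda>w. q (H t w, p (H t w)))"
proof -
  have tT: "t \<le> T" using t by auto
  have pm: "(\<lambda>w. p (H t w)) \<in> measurable (HA t) (count_space UNIV)" by (rule pol_H_meas_HA[OF t p])
  have m: "(\<lambda>w. q (H t w, p (H t w))) \<in> borel_measurable M"
    by (rule HA_to_M[OF tT q_meas_HA[OF tT q pm]])
  define X where "X a w = ennreal (if p (H t w) = a then \<bar>q (H t w, a)\<bar> else 0)" for a w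
  have Xm: "X a \<in> borel_measurable (HA t)" for a
  proof -
    have "(\<lambda>w. q (H t w, a)) \<in> borel_measurable (HA t)" by (rule q_meas_HA[OF tT q]) simp
    moreover have "{w \<in> space (HA t). p (H t w) = a} \<in> sets (HA t)" using pm by measurable
    ultimately show ?thesis unfolding X_def by measurable
  qed
  have XmM: "X a \<in> borel_measurable M" for a by (rule HA_to_M[OF tT Xm])
  have eq: "(\<integral>\<^sup>+w. ennreal (norm (q (H t w, p (H t w)))) \<partial>M) = (\<integral>\<^sup>+w. (\<Sum>a<d t. X a w) \<partial>M)"
  proof (rule nn_integral_cong)
    fix w assume w: "w \<in> space M"
    have "p (H t w) \<in> {..<d t}" using pol_bnd[OF t p w] by simp
    then show "ennreal (norm (q (H t w, p (H t w)))) = (\<Sum>a<d t. X a w)"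
      unfolding X_def by (simp add: if_distrib[of ennreal] sum.delta cong: if_cong)
  qed
  also have "\<dots> = (\<Sum>a<d t. \<integral>\<^sup>+w. X a w \<partial>M)" by (rule nn_integral_sum) (use XmM in auto)
  also have "\<dots> < \<infinity>"
  proof -
    have "(\<integral>\<^sup>+w. X a w \<partial>M) < \<infinity>" for a
    proof -
      have "(\<integral>\<^sup>+w. X a w \<partial>M) \<le> (\<integral>\<^sup>+w. ennreal (1/\<eta>) * (X a w * ennreal (e t a w)) \<partial>M)"
      proof (rule nn_integral_mono_AE)
        show "AE w in M. X a w \<le> ennreal (1/\<eta>) * (X a w * ennreal (e t a w))"
          using ovl_all[OF t]
        proof eventually_elim
          case (elim w)
          show ?case
          proof (cases "p (H t w) = a")
            case True
            then have ee: "\<eta> \<le> e t a w" using elim p by auto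
            then have "1 \<le> (1/\<eta>) * e t a w" using eta by (simp add: field_simps)
            then have "ennreal 1 \<le> ennreal (1/\<eta>) * ennreal (e t a w)"
              using eta by (simp add: ennreal_mult[symmetric] del: ennreal_1)
            then have "X a w * 1 \<le> X a w * (ennreal (1/\<eta>) * ennreal (e t a w))"
              by (intro mult_left_mono) auto
            then show ?thesis by (simp add: mult_ac)
          next
            case False then show ?thesis by (simp add: X_def)
          qed
        qed
      qed
      also have "\<dots> = ennreal (1/\<eta>) * (\<integral>\<^sup>+w. X a w * ennreal (e t a w) \<partial>M)"
        by (rule nn_integral_cmult) (use XmM in measurable)
      also have "\<dots> = ennreal (1/\<eta>) * (\<integral>\<^sup>+w. X a w * ennreal (indicator {x\<in>space M. A t x = a} w) \<partial>M)"
        using key_nn[OF t Xm, of a] by simp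
      also have "\<dots> \<le> ennreal (1/\<eta>) * (\<integral>\<^sup>+w. ennreal (norm (q (H t w, A t w))) \<partial>M)"
        by (intro mult_left_mono nn_integral_mono) (auto simp: X_def indicator_def)
      also have "\<dots> < \<infinity>"
        using qi unfolding integrable_iff_bounded by (simp add: ennreal_mult_less_top)
      finally show ?thesis .
    qed
    then show ?thesis by simp
  qed
  finally show ?thesis unfolding integrable_iff_bounded using m by simp
qed

lemma vt:
  assumes t: "t \<in> {1..T}" and q1: "(q1::'s hist \<times> nat \<Rightarrow> real) \<in> borel_measurable (HM SM t \<Otimes>\<^sub>M count_space UNIV)"
    and q2: "(q2::'s hist \<times> nat \<Rightarrow> real) \<in> borel_measurable (HM SM t \<Otimes>\<^sub>M count_space UNIV)"
    and ae: "AE w in M. q1 (H t w, A t w) = q2 (H t w, A t w)" and p: "p \<in> Pol t"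
  shows "AE w in M. q1 (H t w, p (H t w)) = q2 (H t w, p (H t w))"
proof -
  have tT: "t \<le> T" using t by auto
  have pm: "(\<lambda>w. p (H t w)) \<in> measurable (HA t) (count_space UNIV)" by (rule pol_H_meas_HA[OF t p])
  define X where "X a w = ennreal (if p (H t w) = a then \<bar>q1 (H t w, a) - q2 (H t w, a)\<bar> else 0)" for a w
  have Xm: "X a \<in> borel_measurable (HA t)" for a
  proof -
    have "(\<lambda>w. q1 (H t w, a)) \<in> borel_measurable (HA t)" by (rule q_meas_HA[OF tT q1]) simp
    moreover have "(\<lambda>w. q2 (H t w, a)) \<in> borel_measurable (HA t)" by (rule q_meas_HA[OF tT q2]) simp
    moreover have "{w \<in> space (HA t). p (H t w) = a} \<in> sets (HA t)" using pm by measurable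
    ultimately show ?thesis unfolding X_def by measurable
  qed
  have XmM: "X a \<in> borel_measurable M" for a by (rule HA_to_M[OF tT Xm])
  have "AE w in M. p (H t w) = a \<longrightarrow> q1 (H t w, a) = q2 (H t w, a)" for a
  proof -
    have "(\<integral>\<^sup>+w. X a w * ennreal (indicator {x\<in>space M. A t x = a} w) \<partial>M) = (\<integral>\<^sup>+w. 0 \<partial>M)"
      by (rule nn_integral_cong_AE) (use ae in \<open>auto simp: X_def indicator_def elim!: AE_mp\<close>)
    then have "(\<integral>\<^sup>+w. X a w * ennreal (e t a w) \<partial>M) = 0"
      using key_nn[OF t Xm, of a] by simp
    then have "AE w in M. X a w * ennreal (e t a w) = 0"
      by (subst nn_integral_0_iff_AE[symmetric]) (use XmM in measurable)
    then show ?thesis using ovl_all[OF t]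
    proof eventually_elim
      case (elim w)
      show ?case
      proof
        assume pa: "p (H t w) = a"
        then have "\<eta> \<le> e t a w" using elim p by auto
        then have "e t a w > 0" using eta by auto
        then have "X a w = 0" using elim(1) by (auto simp: ennreal_eq_0_iff)
        then show "q1 (H t w, a) = q2 (H t w, a)" using pa by (simp add: X_def)
      qed
    qed
  qed
  then have "AE w in M. \<forall>a. p (H t w) = a \<longrightarrow> q1 (H t w, a) = q2 (H t w, a)"
    by (subst AE_all_countable) auto
  then show ?thesis by eventually_elim auto
qed

end


lemma int_bnd:
  fixes f g :: "'a \<Rightarrow> real"
  assumes "integrable M f" "g \<in> borel_measurable M" "\<And>w. w \<in> space M \<Longrightarrow> \<bar>g w\<bar> \<le> B"
  shows "integrable M (\<lambda>w. g w * f w)"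
proof (rule Bochner_Integration.integrable_bound[where f="\<lambda>w. B * f w"])
  show "integrable M (\<lambda>w. B * f w)" using assms(1) by simp
  show "(\<lambda>w. g w * f w) \<in> borel_measurable M" using assms(1,2) by measurable
  show "AE w in M. norm (g w * f w) \<le> norm (B * f w)"
  proof (rule AE_I2)
    fix w assume "w \<in> space M"
    then have "\<bar>g w\<bar> \<le> B" by (rule assms(3))
    then have "\<bar>g w\<bar> * \<bar>f w\<bar> \<le> \<bar>B\<bar> * \<bar>f w\<bar>" by (intro mult_right_mono) auto
    then show "norm (g w * f w) \<le> norm (B * f w)" by (simp add: abs_mult)
  qed
qed

context dtr begin

definition rr :: "nat \<Rightarrow> ('s hist \<Rightarrow> nat) \<Rightarrow> 'w \<Rightarrow> real" where
  "rr t p w = (if \<eta> \<le> e t (p (H t w)) w then 1 / e t (p (H t w)) w else 0)"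

definition rho :: "nat \<Rightarrow> ('s hist \<Rightarrow> nat) \<Rightarrow> 'w \<Rightarrow> real" where
  "rho t p w = (if A t w = p (H t w) then rr t p w else 0)"

definition ww :: "(nat \<Rightarrow> 's hist \<Rightarrow> nat) \<Rightarrow> nat \<Rightarrow> 'w \<Rightarrow> real" where
  "ww \<pi> t w = (\<Prod>s\<in>{1..t}. rho s (\<pi> s) w)"

lemma rr_bnd: "0 \<le> rr t p w" "rr t p w \<le> 1 / \<eta>"
  using eta by (auto simp: rr_def field_simps)

lemma rho_bnd: "0 \<le> rho t p w" "rho t p w \<le> 1 / \<eta>"
  using rr_bnd eta by (auto simp: rho_def)

lemma ww_bnd: "0 \<le> ww \<pi> t w" "ww \<pi> t w \<le> (1 / \<eta>) ^ t"
proof -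
  show "0 \<le> ww \<pi> t w" unfolding ww_def by (intro prod_nonneg) (auto intro: rho_bnd)
  have "ww \<pi> t w \<le> (\<Prod>s\<in>{1..t}. 1 / \<eta>)" unfolding ww_def by (intro prod_mono) (auto intro: rho_bnd)
  then show "ww \<pi> t w \<le> (1 / \<eta>) ^ t" by simp
qed

lemma ww_abs: "\<bar>ww \<pi> t w\<bar> \<le> (1 / \<eta>) ^ t"
  using ww_bnd by auto

lemma ww_0: "ww \<pi> 0 w = 1" by (simp add: ww_def)

lemma ww_Suc: "ww \<pi> (Suc t) w = ww \<pi> t w * rho (Suc t) (\<pi> (Suc t)) w"
  by (simp add: ww_def prod.cl_ivl_Suc)

lemma rr_meas: assumes t: "t \<in> {1..T}" and p: "p \<in> Pol t" shows "rr t p \<in> borel_measurable (HA t)"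
proof -
  have "(\<lambda>w. (\<lambda>a w. if \<eta> \<le> e t a w then 1 / e t a w else 0) (p (H t w)) w) \<in> borel_measurable (HA t)"
    by (rule measurable_compose_countable[OF _ pol_H_meas_HA[OF t p]]) simp
  then show ?thesis by (simp add: rr_def[abs_def])
qed

lemma pred_eq_nat: assumes "f \<in> measurable N (count_space UNIV)" "g \<in> measurable N (count_space UNIV)"
  shows "{w \<in> space N. f w = (g w :: nat)} \<in> sets N"
proof -
  have "{w \<in> space N. f w = g w} = (\<Union>a. (f -` {a} \<inter> space N) \<inter> (g -` {a} \<inter> space N))" by auto
  also have "\<dots> \<in> sets N"
  proof -
    have 1: "\<And>a. f -` {a} \<inter> space N \<in> sets N" using measurable_sets[OF assms(1)] by simp
    have 2: "\<And>a. g -` {a} \<inter> space N \<in> sets N" using measurable_sets[OF assms(2)] by simp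
    show ?thesis by (rule sets.countable_UN) (use 1 2 in auto)
  qed
  finally show ?thesis .
qed

lemma rho_meas_HAA: assumes t: "t \<in> {1..T}" and p: "p \<in> Pol t" shows "rho t p \<in> borel_measurable (HAA t)"
proof -
  have 1: "rr t p \<in> borel_measurable (HAA t)" by (rule HA_to_HAA[OF t rr_meas[OF t p]])
  have 2: "(\<lambda>w. p (H t w)) \<in> measurable (HAA t) (count_space UNIV)" by (rule HA_to_HAA[OF t pol_H_meas_HA[OF t p]])
  have 3: "{w \<in> space (HAA t). A t w = p (H t w)} \<in> sets (HAA t)" by (rule pred_eq_nat[OF A_meas_HAA[OF t] 2])
  show ?thesis unfolding rho_def[abs_def] using 1 3 by measurable
qed

lemma rho_meas_HA: assumes s: "1 \<le> s" "s < t" "t \<le> T" and p: "p \<in> Pol s" shows "rho s p \<in> borel_measurable (HA t)"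
proof -
  have sT: "s \<in> {1..T}" using s by auto
  have 1: "rr s p \<in> borel_measurable (HA t)" by (rule HA_mono_meas[OF _ _ rr_meas[OF sT p]]) (use s in auto)
  have 2: "(\<lambda>w. p (H s w)) \<in> measurable (HA t) (count_space UNIV)" by (rule HA_mono_meas[OF _ _ pol_H_meas_HA[OF sT p]]) (use s in auto)
  have 3: "{w \<in> space (HA t). A s w = p (H s w)} \<in> sets (HA t)" by (rule pred_eq_nat[OF As_meas_HA[OF s] 2])
  show ?thesis unfolding rho_def[abs_def] using 1 3 by measurable
qed

lemma ww_meas_HA: assumes "t < t'" "t' \<le> T" "\<forall>s\<in>{1..T}. \<pi> s \<in> Pol s" shows "ww \<pi> t \<in> borel_measurable (HA t')"
  unfolding ww_def[abs_def]
  by (intro borel_measurable_prod rho_meas_HA) (use assms in auto)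

lemma ww_meas_HAA: assumes t: "t \<in> {1..T}" "\<forall>s\<in>{1..T}. \<pi> s \<in> Pol s" shows "ww \<pi> t \<in> borel_measurable (HAA t)"
proof -
  obtain k where k: "t = Suc k" using t by (cases t) auto
  have "(\<lambda>w. ww \<pi> k w * rho t (\<pi> t) w) \<in> borel_measurable (HAA t)"
  proof (intro borel_measurable_times)
    show "ww \<pi> k \<in> borel_measurable (HAA t)" by (rule HA_to_HAA[OF t(1) ww_meas_HA]) (use k t in auto)
    show "rho t (\<pi> t) \<in> borel_measurable (HAA t)" by (rule rho_meas_HAA) (use t in auto)
  qed
  then show ?thesis unfolding k ww_Suc by simp
qed

lemma ww_meas: "t \<le> T \<Longrightarrow> \<forall>s\<in>{1..T}. \<pi> s \<in> Pol s \<Longrightarrow> ww \<pi> t \<in> borel_measurable M"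
proof (cases "t = 0")
  case True
  have "ww \<pi> 0 = (\<lambda>w. 1)" by (simp add: ww_0 fun_eq_iff)
  then show ?thesis using True by simp
qed (auto intro: HAA_to_M[OF _ ww_meas_HAA])

lemma obsY_int: assumes t: "t \<in> {1..T}" shows "integrable M (obs_Y Y A t)"
proof -
  have "integrable M (\<lambda>w. \<Sum>as\<in>act_seqs d t. (if obs_acts A t w = as then 1 else 0) * Y t as w)"
  proof (rule Bochner_Integration.integrable_sum)
    fix as assume as: "as \<in> act_seqs d t"
    show "integrable M (\<lambda>w. (if obs_acts A t w = as then 1 else 0) * Y t as w)"
    proof (rule int_bnd)
    show "integrable M (Y t as)" by (rule Yint[OF t as])
    have om: "obs_acts A t \<in> measurable M (count_space (act_seqs d t))" by (rule obs_acts_meas) (use t in auto)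
    have "{w \<in> space M. obs_acts A t w = as} \<in> sets M"
    proof -
      have "obs_acts A t -` {as} \<inter> space M \<in> sets M" by (rule measurable_sets[OF om]) (use as in auto)
      moreover have "obs_acts A t -` {as} \<inter> space M = {w \<in> space M. obs_acts A t w = as}" by auto
      ultimately show ?thesis by simp
    qed
    then show "(\<lambda>w. if obs_acts A t w = as then 1 else 0 :: real) \<in> borel_measurable M" by measurable
    show "\<And>w. w \<in> space M \<Longrightarrow> \<bar>if obs_acts A t w = as then 1 else 0 :: real\<bar> \<le> 1" by auto
  qed
  qed
  moreover have "w \<in> space M \<Longrightarrow> (\<Sum>as\<in>act_seqs d t. (if obs_acts A t w = as then 1 else 0) * Y t as w) = obs_Y Y A t w" for w
    using obs_acts_in[of t w] t finite_act_seqs by (simp add: obs_Y_def if_distrib[of "\<lambda>x. x * _"] sum.delta cong: if_cong)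
  ultimately show ?thesis
    using Bochner_Integration.integrable_cong[of M M "\<lambda>w. \<Sum>as\<in>act_seqs d t. (if obs_acts A t w = as then 1 else 0) * Y t as w" "obs_Y Y A t"]
    by simp
qed

end


context dtr begin

definition ZZ :: "(nat \<Rightarrow> 's hist \<Rightarrow> nat) \<Rightarrow> (nat \<Rightarrow> 's hist \<times> nat \<Rightarrow> real) \<Rightarrow> nat \<Rightarrow> 'w \<Rightarrow> real" where
  "ZZ \<pi>' Q t = (if t = T then obs_Y Y A T
      else (\<lambda>w. obs_Y Y A t w + Q (Suc t) (H (Suc t) w, \<pi>' (Suc t) (H (Suc t) w))))"

lemma Qfam:
  assumes "Q_family M SM Y S A T \<pi>' Q" "t \<in> {1..T}"
  shows "Q t \<in> borel_measurable (HM SM t \<Otimes>\<^sub>M count_space UNIV)"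
    and "AE w in M. Q t (H t w, A t w) = real_cond_exp M (HAA t) (ZZ \<pi>' Q t) w"
  using assms unfolding Q_family_def is_Q_version_def ZZ_def by auto

lemma QA_meas: "Q_family M SM Y S A T \<pi>' Q \<Longrightarrow> t \<in> {1..T} \<Longrightarrow> (\<lambda>w. Q t (H t w, A t w)) \<in> borel_measurable M"
  by (rule HAA_to_M[OF _ q_meas_HAA[OF _ Qfam(1)]])

lemma Qp_meas_HA: "Q_family M SM Y S A T \<pi>' Q \<Longrightarrow> t \<in> {1..T} \<Longrightarrow> p \<in> Pol t \<Longrightarrow> (\<lambda>w. Q t (H t w, p (H t w))) \<in> borel_measurable (HA t)"
  by (rule q_meas_HA[OF _ Qfam(1) pol_H_meas_HA]) auto

lemma Qp_meas: "Q_family M SM Y S A T \<pi>' Q \<Longrightarrow> t \<in> {1..T} \<Longrightarrow> p \<in> Pol t \<Longrightarrow> (\<lambda>w. Q t (H t w, p (H t w))) \<in> borel_measurable M"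
  by (rule HA_to_M[OF _ Qp_meas_HA]) auto

lemma Q_int:
  assumes \<pi>': "\<forall>s\<in>{2..T}. \<pi>' s \<in> Pol s" and Q: "Q_family M SM Y S A T \<pi>' Q" and t: "t \<in> {1..T}"
  shows "integrable M (ZZ \<pi>' Q t) \<and> integrable M (\<lambda>w. Q t (H t w, A t w))"
proof -
  have "t \<le> T" using t by auto
  then show ?thesis
  proof (induction rule: inc_induct)
    have z: "integrable M (ZZ \<pi>' Q T)" using obsY_int[of T] T1 by (simp add: ZZ_def)
    interpret sfa: sigma_finite_subalgebra M "HAA T" by (rule HAA_sf) (use T1 in auto)
    have "integrable M (real_cond_exp M (HAA T) (ZZ \<pi>' Q T))" by (rule sfa.real_cond_exp_int(1)[OF z])
    then have "integrable M (\<lambda>w. Q T (H T w, A T w))"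
      by (rule integrable_cong_AE_imp) (use Qfam(2)[OF Q, of T] QA_meas[OF Q, of T] T1 in \<open>auto elim: AE_mp\<close>)
    then show "integrable M (ZZ \<pi>' Q T) \<and> integrable M (\<lambda>w. Q T (H T w, A T w))" using z by simp
  next
    fix n assume n: "t \<le> n" "n < T" and IH: "integrable M (ZZ \<pi>' Q (Suc n)) \<and> integrable M (\<lambda>w. Q (Suc n) (H (Suc n) w, A (Suc n) w))"
    have nT: "n \<in> {1..T}" using n t by auto
    have sT: "Suc n \<in> {1..T}" using n by auto
    have "integrable M (\<lambda>w. Q (Suc n) (H (Suc n) w, \<pi>' (Suc n) (H (Suc n) w)))"
      by (rule int_pol[OF sT Qfam(1)[OF Q sT]]) (use IH \<pi>' n t in auto)
    then have z: "integrable M (ZZ \<pi>' Q n)" using obsY_int[OF nT] n by (simp add: ZZ_def)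
    interpret sfa: sigma_finite_subalgebra M "HAA n" by (rule HAA_sf[OF nT])
    have "integrable M (real_cond_exp M (HAA n) (ZZ \<pi>' Q n))" by (rule sfa.real_cond_exp_int(1)[OF z])
    then have "integrable M (\<lambda>w. Q n (H n w, A n w))"
      by (rule integrable_cong_AE_imp) (use Qfam(2)[OF Q nT] QA_meas[OF Q nT] in \<open>auto elim: AE_mp\<close>)
    then show "integrable M (ZZ \<pi>' Q n) \<and> integrable M (\<lambda>w. Q n (H n w, A n w))" using z by simp
  qed
qed

lemma Qp_int:
  assumes \<pi>': "\<forall>s\<in>{2..T}. \<pi>' s \<in> Pol s" and Q: "Q_family M SM Y S A T \<pi>' Q" and t: "t \<in> {1..T}" and p: "p \<in> Pol t"
  shows "integrable M (\<lambda>w. Q t (H t w, p (H t w)))"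
  by (rule int_pol[OF t Qfam(1)[OF Q t] _ p]) (use Q_int[OF \<pi>' Q t] in auto)

lemma ww_rr_abs: "\<bar>ww \<pi> k w * rr t p w\<bar> \<le> (1/\<eta>) ^ k * (1/\<eta>)"
  unfolding abs_mult using ww_abs[of \<pi> k w] rr_bnd[of t p w] eta
  by (intro mult_mono) auto

lemma B_core:
  assumes \<pi>: "\<forall>s\<in>{1..T}. \<pi> s \<in> Pol s" and \<pi>': "\<forall>s\<in>{2..T}. \<pi>' s \<in> Pol s"
    and Q: "Q_family M SM Y S A T \<pi>' Q" and t: "t \<in> {1..T}"
  shows "(\<integral>w. ww \<pi> (t - 1) w * Q t (H t w, \<pi> t (H t w)) \<partial>M) =
     (\<integral>w. ww \<pi> t w * obs_Y Y A t w \<partial>M) +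
     (if t < T then (\<integral>w. ww \<pi> t w * Q (Suc t) (H (Suc t) w, \<pi>' (Suc t) (H (Suc t) w)) \<partial>M) else 0)"
proof -
  have tT: "t \<le> T" using t by auto
  obtain k where k: "t = Suc k" using t by (cases t) auto
  have pt: "\<pi> t \<in> Pol t" using \<pi> t by auto
  define Qp where "Qp w = Q t (H t w, \<pi> t (H t w))" for w
  have Qpint: "integrable M Qp" unfolding Qp_def by (rule Qp_int[OF \<pi>' Q t pt])
  have Qpm: "Qp \<in> borel_measurable (HA t)" unfolding Qp_def by (rule Qp_meas_HA[OF Q t pt])
  have pm: "(\<lambda>w. \<pi> t (H t w)) \<in> measurable (HA t) (count_space UNIV)" by (rule pol_H_meas_HA[OF t pt])
  define K where "K w = ww \<pi> k w * rr t (\<pi> t) w * Qp w" for w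
  have wkm: "ww \<pi> k \<in> borel_measurable (HA t)" by (rule ww_meas_HA) (use k tT \<pi> in auto)
  have Km: "K \<in> borel_measurable (HA t)" unfolding K_def using wkm rr_meas[OF t pt] Qpm by measurable
  have KmM: "K \<in> borel_measurable M" by (rule HA_to_M[OF tT Km])
  have Kint: "integrable M K"
  proof -
    have "integrable M (\<lambda>w. (ww \<pi> k w * rr t (\<pi> t) w) * Qp w)"
      by (rule int_bnd[OF Qpint _ ww_rr_abs]) (use HA_to_M[OF tT wkm] HA_to_M[OF tT rr_meas[OF t pt]] in measurable)
    then show ?thesis by (simp add: K_def[abs_def])
  qed
  define I where "I a w = (if \<pi> t (H t w) = a then 1 else 0 :: real)" for a w
  have Im: "I a \<in> borel_measurable (HA t)" for a
  proof -
    have "{w \<in> space (HA t). \<pi> t (H t w) = a} \<in> sets (HA t)" using pm by measurable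
    then show ?thesis unfolding I_def[abs_def] by measurable
  qed
  let ?Ind = "\<lambda>a. indicator {x\<in>space M. A t x = a} :: 'w \<Rightarrow> real"
  have KIint: "integrable M (\<lambda>w. (K w * I a w) * ?Ind a w)" for a
  proof -
    have "integrable M (\<lambda>w. (I a w * ?Ind a w) * K w)"
      by (rule int_bnd[OF Kint, where B=1]) (use HA_to_M[OF tT Im] Aset_sets[OF t] in \<open>measurable, auto simp: I_def indicator_def\<close>)
    then show ?thesis by (simp add: mult_ac)
  qed
  have KIm: "(\<lambda>w. K w * I a w) \<in> borel_measurable (HA t)" for a using Km Im by measurable
  have wwt: "ww \<pi> t w = ww \<pi> k w * rho t (\<pi> t) w" for w by (simp add: k ww_Suc)
  have "(\<integral>w. ww \<pi> t w * Q t (H t w, A t w) \<partial>M) = (\<integral>w. (\<Sum>a<d t. (K w * I a w) * ?Ind a w) \<partial>M)"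
  proof (rule Bochner_Integration.integral_cong[OF refl])
    fix w assume w: "w \<in> space M"
    have b: "\<pi> t (H t w) < d t" by (rule pol_bnd[OF t pt w])
    show "ww \<pi> t w * Q t (H t w, A t w) = (\<Sum>a<d t. (K w * I a w) * ?Ind a w)"
    proof (cases "A t w = \<pi> t (H t w)")
      case True
      then have "(\<Sum>a<d t. (K w * I a w) * ?Ind a w) = (\<Sum>a<d t. if a = \<pi> t (H t w) then K w else 0)"
        using w by (intro sum.cong) (auto simp: I_def indicator_def)
      also have "\<dots> = K w" using b by simp
      finally show ?thesis using True by (simp add: wwt rho_def K_def Qp_def)
    next
      case False
      then have "(\<Sum>a<d t. (K w * I a w) * ?Ind a w) = 0"
        using w by (intro sum.neutral) (auto simp: I_def indicator_def)
      then show ?thesis using False by (simp add: wwt rho_def)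
    qed
  qed
  also have "\<dots> = (\<Sum>a<d t. (\<integral>w. (K w * I a w) * ?Ind a w \<partial>M))"
    by (rule Bochner_Integration.integral_sum) (rule KIint)
  also have "\<dots> = (\<Sum>a<d t. (\<integral>w. (K w * I a w) * e t a w \<partial>M))"
    by (intro sum.cong refl key_real(1)[OF t KIm KIint])
  also have "\<dots> = (\<integral>w. (\<Sum>a<d t. (K w * I a w) * e t a w) \<partial>M)"
    by (rule Bochner_Integration.integral_sum[symmetric]) (rule key_real(2)[OF t KIm KIint])
  also have "\<dots> = (\<integral>w. ww \<pi> k w * Qp w \<partial>M)"
  proof (rule integral_cong_AE)
    show "(\<lambda>w. \<Sum>a<d t. K w * I a w * e t a w) \<in> borel_measurable M"
      using KmM HA_to_M[OF tT Im] by measurable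
    show "(\<lambda>w. ww \<pi> k w * Qp w) \<in> borel_measurable M" using HA_to_M[OF tT wkm] HA_to_M[OF tT Qpm] by measurable
    show "AE w in M. (\<Sum>a<d t. K w * I a w * e t a w) = ww \<pi> k w * Qp w"
      using ovl_pol[OF t pt]
    proof (rule AE_mp, intro AE_I2 impI)
      fix w assume w: "w \<in> space M" and ee: "\<eta> \<le> e t (\<pi> t (H t w)) w"
      have b: "\<pi> t (H t w) < d t" by (rule pol_bnd[OF t pt w])
      have "(\<Sum>a<d t. K w * I a w * e t a w) = (\<Sum>a<d t. if a = \<pi> t (H t w) then K w * e t (\<pi> t (H t w)) w else 0)"
        by (intro sum.cong) (auto simp: I_def)
      also have "\<dots> = K w * e t (\<pi> t (H t w)) w" using b by simp
      also have "\<dots> = ww \<pi> k w * Qp w" using ee eta by (simp add: K_def rr_def)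
      finally show "(\<Sum>a<d t. K w * I a w * e t a w) = ww \<pi> k w * Qp w" .
    qed
  qed
  finally have step1: "(\<integral>w. ww \<pi> t w * Q t (H t w, A t w) \<partial>M) = (\<integral>w. ww \<pi> (t - 1) w * Q t (H t w, \<pi> t (H t w)) \<partial>M)"
    by (simp add: k Qp_def)
  interpret sfa: sigma_finite_subalgebra M "HAA t" by (rule HAA_sf[OF t])
  have wwtm: "ww \<pi> t \<in> borel_measurable (HAA t)" by (rule ww_meas_HAA[OF t \<pi>])
  have Zint: "integrable M (ZZ \<pi>' Q t)" using Q_int[OF \<pi>' Q t] by simp
  have wZint: "integrable M (\<lambda>w. ww \<pi> t w * ZZ \<pi>' Q t w)"
    by (rule int_bnd[OF Zint _ ww_abs]) (rule HAA_to_M[OF t wwtm])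
  have "(\<integral>w. ww \<pi> t w * Q t (H t w, A t w) \<partial>M) = (\<integral>w. ww \<pi> t w * real_cond_exp M (HAA t) (ZZ \<pi>' Q t) w \<partial>M)"
  proof (rule integral_cong_AE)
    show "(\<lambda>w. ww \<pi> t w * Q t (H t w, A t w)) \<in> borel_measurable M"
      using HAA_to_M[OF t wwtm] QA_meas[OF Q t] by measurable
    show "(\<lambda>w. ww \<pi> t w * real_cond_exp M (HAA t) (ZZ \<pi>' Q t) w) \<in> borel_measurable M"
      using HAA_to_M[OF t wwtm] by measurable
    show "AE w in M. ww \<pi> t w * Q t (H t w, A t w) = ww \<pi> t w * real_cond_exp M (HAA t) (ZZ \<pi>' Q t) w"
      using Qfam(2)[OF Q t] by eventually_elim simp
  qed
  also have "\<dots> = (\<integral>w. ww \<pi> t w * ZZ \<pi>' Q t w \<partial>M)"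
    by (rule sfa.real_cond_exp_intg(2)[OF wZint wwtm]) (use Zint in auto)
  finally have step2: "(\<integral>w. ww \<pi> (t - 1) w * Q t (H t w, \<pi> t (H t w)) \<partial>M) = (\<integral>w. ww \<pi> t w * ZZ \<pi>' Q t w \<partial>M)"
    using step1 by simp
  show ?thesis
  proof (cases "t < T")
    case False
    then have "t = T" using tT by simp
    then show ?thesis using step2 by (simp add: ZZ_def)
  next
    case True
    have sT: "Suc t \<in> {1..T}" using True by auto
    have i1: "integrable M (\<lambda>w. ww \<pi> t w * obs_Y Y A t w)"
      by (rule int_bnd[OF obsY_int[OF t] _ ww_abs]) (rule HAA_to_M[OF t wwtm])
    have i2: "integrable M (\<lambda>w. ww \<pi> t w * Q (Suc t) (H (Suc t) w, \<pi>' (Suc t) (H (Suc t) w)))"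
    proof -
      have "\<pi>' (Suc t) \<in> Pol (Suc t)" using \<pi>' True t by auto
      then show ?thesis by (rule int_bnd[OF Qp_int[OF \<pi>' Q sT] _ ww_abs]) (use HAA_to_M[OF t wwtm] in auto)
    qed
    have "(\<integral>w. ww \<pi> t w * ZZ \<pi>' Q t w \<partial>M) = (\<integral>w. ww \<pi> t w * obs_Y Y A t w + ww \<pi> t w * Q (Suc t) (H (Suc t) w, \<pi>' (Suc t) (H (Suc t) w)) \<partial>M)"
      using True by (simp add: ZZ_def distrib_left)
    also have "\<dots> = (\<integral>w. ww \<pi> t w * obs_Y Y A t w \<partial>M) + (\<integral>w. ww \<pi> t w * Q (Suc t) (H (Suc t) w, \<pi>' (Suc t) (H (Suc t) w)) \<partial>M)"
      by (rule Bochner_Integration.integral_add[OF i1 i2])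
    finally show ?thesis using step2 True by simp
  qed
qed

end


context dtr begin

definition ipw :: "(nat \<Rightarrow> 's hist \<Rightarrow> nat) \<Rightarrow> real" where
  "ipw \<pi> = (\<Sum>t\<in>{1..T}. \<integral>w. ww \<pi> t w * obs_Y Y A t w \<partial>M)"


lemma B_ineq:
  assumes \<pi>: "\<forall>s\<in>{1..T}. \<pi> s \<in> Pol s" and \<pi>': "\<forall>s\<in>{2..T}. \<pi>' s \<in> Pol s"
    and Q: "Q_family M SM Y S A T \<pi>' Q"
    and le: "\<forall>t\<in>{2..T}. AE w in M. Q t (H t w, \<pi> t (H t w)) \<le> Q t (H t w, \<pi>' t (H t w))"
  shows "ipw \<pi> \<le> (\<integral>w. Q 1 (H 1 w, \<pi> 1 (H 1 w)) \<partial>M)"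
proof -
  have main: "(\<Sum>u\<in>{i..T}. \<integral>w. ww \<pi> u w * obs_Y Y A u w \<partial>M) \<le> (\<integral>w. ww \<pi> (i - 1) w * Q i (H i w, \<pi> i (H i w)) \<partial>M)"
    if i1: "1 \<le> i" and iT: "i \<le> T" for i
  using iT proof (induction rule: inc_induct)
    show "(\<Sum>u\<in>{T..T}. \<integral>w. ww \<pi> u w * obs_Y Y A u w \<partial>M) \<le> (\<integral>w. ww \<pi> (T - 1) w * Q T (H T w, \<pi> T (H T w)) \<partial>M)"
      using B_core[OF \<pi> \<pi>' Q, of T] T1 by simp
  next
    fix n assume n0: "i \<le> n" "n < T"
      and IH: "(\<Sum>u\<in>{Suc n..T}. \<integral>w. ww \<pi> u w * obs_Y Y A u w \<partial>M) \<le> (\<integral>w. ww \<pi> (Suc n - 1) w * Q (Suc n) (H (Suc n) w, \<pi> (Suc n) (H (Suc n) w)) \<partial>M)"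
    have n: "1 \<le> n" "n < T" using n0 i1 by auto
    have nT: "n \<in> {1..T}" and sT: "Suc n \<in> {1..T}" and s2: "Suc n \<in> {2..T}" using n by auto
    have i1: "integrable M (\<lambda>w. ww \<pi> n w * Q (Suc n) (H (Suc n) w, \<pi> (Suc n) (H (Suc n) w)))"
      by (rule int_bnd[OF Qp_int[OF \<pi>' Q sT] _ ww_abs]) (use ww_meas[OF _ \<pi>] n \<pi> in auto)
    have i2: "integrable M (\<lambda>w. ww \<pi> n w * Q (Suc n) (H (Suc n) w, \<pi>' (Suc n) (H (Suc n) w)))"
      by (rule int_bnd[OF Qp_int[OF \<pi>' Q sT] _ ww_abs]) (use ww_meas[OF _ \<pi>] n \<pi>' s2 in auto)
    have m: "(\<integral>w. ww \<pi> n w * Q (Suc n) (H (Suc n) w, \<pi> (Suc n) (H (Suc n) w)) \<partial>M)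
        \<le> (\<integral>w. ww \<pi> n w * Q (Suc n) (H (Suc n) w, \<pi>' (Suc n) (H (Suc n) w)) \<partial>M)"
    proof (rule integral_mono_AE[OF i1 i2])
      show "AE w in M. ww \<pi> n w * Q (Suc n) (H (Suc n) w, \<pi> (Suc n) (H (Suc n) w)) \<le> ww \<pi> n w * Q (Suc n) (H (Suc n) w, \<pi>' (Suc n) (H (Suc n) w))"
      proof -
        have "AE w in M. Q (Suc n) (H (Suc n) w, \<pi> (Suc n) (H (Suc n) w)) \<le> Q (Suc n) (H (Suc n) w, \<pi>' (Suc n) (H (Suc n) w))"
          using le s2 by auto
        then show ?thesis by eventually_elim (intro mult_left_mono ww_bnd)
      qed
    qed
    have "(\<Sum>u\<in>{n..T}. \<integral>w. ww \<pi> u w * obs_Y Y A u w \<partial>M) = (\<integral>w. ww \<pi> n w * obs_Y Y A n w \<partial>M) + (\<Sum>u\<in>{Suc n..T}. \<integral>w. ww \<pi> u w * obs_Y Y A u w \<partial>M)"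
      using n by (simp add: sum.atLeast_Suc_atMost)
    also have "\<dots> \<le> (\<integral>w. ww \<pi> n w * obs_Y Y A n w \<partial>M) + (\<integral>w. ww \<pi> n w * Q (Suc n) (H (Suc n) w, \<pi>' (Suc n) (H (Suc n) w)) \<partial>M)"
      using IH m by simp
    also have "\<dots> = (\<integral>w. ww \<pi> (n - 1) w * Q n (H n w, \<pi> n (H n w)) \<partial>M)"
      using B_core[OF \<pi> \<pi>' Q nT] n by simp
    finally show "(\<Sum>u\<in>{n..T}. \<integral>w. ww \<pi> u w * obs_Y Y A u w \<partial>M) \<le> (\<integral>w. ww \<pi> (n - 1) w * Q n (H n w, \<pi> n (H n w)) \<partial>M)" .
  qed
  show ?thesis using main[of 1] T1 by (simp add: ipw_def ww_0)
qed

lemma B_eq: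
  assumes \<pi>: "\<forall>s\<in>{1..T}. \<pi> s \<in> Pol s"
    and Q: "Q_family M SM Y S A T \<pi> Q"
  shows "ipw \<pi> = (\<integral>w. Q 1 (H 1 w, \<pi> 1 (H 1 w)) \<partial>M)"
proof -
  have \<pi>': "\<forall>s\<in>{2..T}. \<pi> s \<in> Pol s" using \<pi> by auto
  have main: "(\<Sum>u\<in>{i..T}. \<integral>w. ww \<pi> u w * obs_Y Y A u w \<partial>M) = (\<integral>w. ww \<pi> (i - 1) w * Q i (H i w, \<pi> i (H i w)) \<partial>M)"
    if i1: "1 \<le> i" and iT: "i \<le> T" for i
  using iT proof (induction rule: inc_induct)
    show "(\<Sum>u\<in>{T..T}. \<integral>w. ww \<pi> u w * obs_Y Y A u w \<partial>M) = (\<integral>w. ww \<pi> (T - 1) w * Q T (H T w, \<pi> T (H T w)) \<partial>M)"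
      using B_core[OF \<pi> \<pi>' Q, of T] T1 by simp
  next
    fix n assume n0: "i \<le> n" "n < T"
      and IH: "(\<Sum>u\<in>{Suc n..T}. \<integral>w. ww \<pi> u w * obs_Y Y A u w \<partial>M) = (\<integral>w. ww \<pi> (Suc n - 1) w * Q (Suc n) (H (Suc n) w, \<pi> (Suc n) (H (Suc n) w)) \<partial>M)"
    have n: "1 \<le> n" "n < T" using n0 i1 by auto
    have nT: "n \<in> {1..T}" using n by auto
    have "(\<Sum>u\<in>{n..T}. \<integral>w. ww \<pi> u w * obs_Y Y A u w \<partial>M) = (\<integral>w. ww \<pi> n w * obs_Y Y A n w \<partial>M) + (\<Sum>u\<in>{Suc n..T}. \<integral>w. ww \<pi> u w * obs_Y Y A u w \<partial>M)"
      using n by (simp add: sum.atLeast_Suc_atMost)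
    also have "\<dots> = (\<integral>w. ww \<pi> (n - 1) w * Q n (H n w, \<pi> n (H n w)) \<partial>M)"
      using B_core[OF \<pi> \<pi>' Q nT] n IH by simp
    finally show "(\<Sum>u\<in>{n..T}. \<integral>w. ww \<pi> u w * obs_Y Y A u w \<partial>M) = (\<integral>w. ww \<pi> (n - 1) w * Q n (H n w, \<pi> n (H n w)) \<partial>M)" .
  qed
  show ?thesis using main[of 1] T1 by (simp add: ipw_def ww_0)
qed

lemma C_step:
  assumes \<pi>s: "\<forall>t\<in>{2..T}. \<pi>s t \<in> Pol t" and Qs: "Q_family M SM Y S A T \<pi>s Qs"
    and opt: "\<forall>t\<in>{2..T}. AE w in M. \<forall>p\<in>Pol t. Qs t (H t w, p (H t w)) \<le> Qs t (H t w, \<pi>s t (H t w))"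
    and \<pi>B: "\<forall>t\<in>{1..T}. \<pi>B t \<in> Pol t" and QB: "Q_family M SM Y S A T \<pi>B QB"
    and bi: "\<forall>t\<in>{1..T}. \<forall>p\<in>Pol t. (\<integral>w. QB t (H t w, p (H t w)) \<partial>M) \<le> (\<integral>w. QB t (H t w, \<pi>B t (H t w)) \<partial>M)"
    and t: "t \<in> {2..T}"
  shows "(AE w in M. QB t (H t w, A t w) = Qs t (H t w, A t w)) \<and>
         (AE w in M. QB t (H t w, \<pi>B t (H t w)) = Qs t (H t w, \<pi>s t (H t w)))"
proof -
  have \<pi>B': "\<forall>t\<in>{2..T}. \<pi>B t \<in> Pol t" using \<pi>B by auto
  have part2: "AE w in M. QB n (H n w, \<pi>B n (H n w)) = Qs n (H n w, \<pi>s n (H n w))"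
    if n: "n \<in> {2..T}" and p1: "AE w in M. QB n (H n w, A n w) = Qs n (H n w, A n w)" for n
  proof -
    have n1: "n \<in> {1..T}" using n by auto
    have pB: "\<pi>B n \<in> Pol n" and ps: "\<pi>s n \<in> Pol n" using \<pi>B \<pi>s n by auto
    have v1: "AE w in M. QB n (H n w, \<pi>B n (H n w)) = Qs n (H n w, \<pi>B n (H n w))"
      by (rule vt[OF n1 Qfam(1)[OF QB n1] Qfam(1)[OF Qs n1] p1 pB])
    have v2: "AE w in M. QB n (H n w, \<pi>s n (H n w)) = Qs n (H n w, \<pi>s n (H n w))"
      by (rule vt[OF n1 Qfam(1)[OF QB n1] Qfam(1)[OF Qs n1] p1 ps])
    have iB1: "integrable M (\<lambda>w. QB n (H n w, \<pi>B n (H n w)))" by (rule Qp_int[OF \<pi>B' QB n1 pB])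
    have iB2: "integrable M (\<lambda>w. QB n (H n w, \<pi>s n (H n w)))" by (rule Qp_int[OF \<pi>B' QB n1 ps])
    have is1: "integrable M (\<lambda>w. Qs n (H n w, \<pi>B n (H n w)))" by (rule Qp_int[OF \<pi>s Qs n1 pB])
    have is2: "integrable M (\<lambda>w. Qs n (H n w, \<pi>s n (H n w)))" by (rule Qp_int[OF \<pi>s Qs n1 ps])
    have "(\<integral>w. QB n (H n w, \<pi>s n (H n w)) \<partial>M) \<le> (\<integral>w. QB n (H n w, \<pi>B n (H n w)) \<partial>M)"
      using bi n1 ps by auto
    moreover have "(\<integral>w. QB n (H n w, \<pi>s n (H n w)) \<partial>M) = (\<integral>w. Qs n (H n w, \<pi>s n (H n w)) \<partial>M)"
      by (rule integral_cong_AE) (use v2 Qp_meas[OF QB n1 ps] Qp_meas[OF Qs n1 ps] in auto)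
    moreover have "(\<integral>w. QB n (H n w, \<pi>B n (H n w)) \<partial>M) = (\<integral>w. Qs n (H n w, \<pi>B n (H n w)) \<partial>M)"
      by (rule integral_cong_AE) (use v1 Qp_meas[OF QB n1 pB] Qp_meas[OF Qs n1 pB] in auto)
    ultimately have le1: "(\<integral>w. Qs n (H n w, \<pi>s n (H n w)) - Qs n (H n w, \<pi>B n (H n w)) \<partial>M) \<le> 0"
      using is1 is2 by simp
    have o: "AE w in M. \<forall>p\<in>Pol n. Qs n (H n w, p (H n w)) \<le> Qs n (H n w, \<pi>s n (H n w))"
      using opt n by auto
    have ae1: "AE w in M. 0 \<le> Qs n (H n w, \<pi>s n (H n w)) - Qs n (H n w, \<pi>B n (H n w))"
      using o
    proof eventually_elim
      case (elim w) then show ?case using pB by force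
    qed
    have "(\<integral>w. Qs n (H n w, \<pi>s n (H n w)) - Qs n (H n w, \<pi>B n (H n w)) \<partial>M) = 0"
      using le1 integral_nonneg_AE[OF ae1] by simp
    then have "AE w in M. Qs n (H n w, \<pi>s n (H n w)) - Qs n (H n w, \<pi>B n (H n w)) = 0"
      using integral_nonneg_eq_0_iff_AE[OF _ ae1] is1 is2 by simp
    then show ?thesis using v1 by eventually_elim simp
  qed
  have "t \<le> T" using t by auto
  then have "2 \<le> t \<longrightarrow> (AE w in M. QB t (H t w, A t w) = Qs t (H t w, A t w))"
  proof (induction rule: inc_induct)
    interpret sfa: sigma_finite_subalgebra M "HAA T" by (rule HAA_sf) (use T1 in auto)
    show "2 \<le> T \<longrightarrow> (AE w in M. QB T (H T w, A T w) = Qs T (H T w, A T w))"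
    proof
      have "AE w in M. QB T (H T w, A T w) = real_cond_exp M (HAA T) (ZZ \<pi>B QB T) w" by (rule Qfam(2)[OF QB]) (use T1 in auto)
      moreover have "AE w in M. Qs T (H T w, A T w) = real_cond_exp M (HAA T) (ZZ \<pi>s Qs T) w" by (rule Qfam(2)[OF Qs]) (use T1 in auto)
      ultimately show "AE w in M. QB T (H T w, A T w) = Qs T (H T w, A T w)"
        by eventually_elim (simp add: ZZ_def)
    qed
  next
    fix n assume n: "t \<le> n" "n < T" and IH: "2 \<le> Suc n \<longrightarrow> (AE w in M. QB (Suc n) (H (Suc n) w, A (Suc n) w) = Qs (Suc n) (H (Suc n) w, A (Suc n) w))"
    show "2 \<le> n \<longrightarrow> (AE w in M. QB n (H n w, A n w) = Qs n (H n w, A n w))"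
    proof
      assume n2: "2 \<le> n"
      have nT: "n \<in> {1..T}" and s2: "Suc n \<in> {2..T}" using n n2 by auto
      interpret sfa: sigma_finite_subalgebra M "HAA n" by (rule HAA_sf[OF nT])
      have p2: "AE w in M. QB (Suc n) (H (Suc n) w, \<pi>B (Suc n) (H (Suc n) w)) = Qs (Suc n) (H (Suc n) w, \<pi>s (Suc n) (H (Suc n) w))"
        by (rule part2[OF s2]) (use IH n2 in auto)
      have zae: "AE w in M. ZZ \<pi>B QB n w = ZZ \<pi>s Qs n w"
        using p2
      proof eventually_elim
        case (elim w) then show ?case using n by (simp add: ZZ_def)
      qed
      have "AE w in M. real_cond_exp M (HAA n) (ZZ \<pi>B QB n) w = real_cond_exp M (HAA n) (ZZ \<pi>s Qs n) w"
        by (rule sfa.real_cond_exp_cong[OF zae]) (use Q_int[OF \<pi>B' QB nT] Q_int[OF \<pi>s Qs nT] in auto)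
      then show "AE w in M. QB n (H n w, A n w) = Qs n (H n w, A n w)"
        using Qfam(2)[OF QB nT] Qfam(2)[OF Qs nT] by eventually_elim simp
    qed
  qed
  then have p1: "AE w in M. QB t (H t w, A t w) = Qs t (H t w, A t w)" using t by auto
  show ?thesis using p1 part2[OF t p1] by simp
qed

lemma ipw_le:
  assumes \<pi>s: "\<forall>t\<in>{2..T}. \<pi>s t \<in> Pol t" and Qs: "Q_family M SM Y S A T \<pi>s Qs"
    and opt: "\<forall>t\<in>{2..T}. AE w in M. \<forall>p\<in>Pol t. Qs t (H t w, p (H t w)) \<le> Qs t (H t w, \<pi>s t (H t w))"
    and \<pi>B: "\<forall>t\<in>{1..T}. \<pi>B t \<in> Pol t" and QB: "Q_family M SM Y S A T \<pi>B QB"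
    and bi: "\<forall>t\<in>{1..T}. \<forall>p\<in>Pol t. (\<integral>w. QB t (H t w, p (H t w)) \<partial>M) \<le> (\<integral>w. QB t (H t w, \<pi>B t (H t w)) \<partial>M)"
    and \<pi>: "\<forall>t\<in>{1..T}. \<pi> t \<in> Pol t"
  shows "ipw \<pi> \<le> ipw \<pi>B"
proof -
  have \<pi>B': "\<forall>t\<in>{2..T}. \<pi>B t \<in> Pol t" using \<pi>B by auto
  have le: "\<forall>t\<in>{2..T}. AE w in M. QB t (H t w, \<pi> t (H t w)) \<le> QB t (H t w, \<pi>B t (H t w))"
  proof
    fix t assume t: "t \<in> {2..T}"
    have t1: "t \<in> {1..T}" using t by auto
    have pt: "\<pi> t \<in> Pol t" using \<pi> t1 by auto
    note C = C_step[OF \<pi>s Qs opt \<pi>B QB bi t]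
    have v: "AE w in M. QB t (H t w, \<pi> t (H t w)) = Qs t (H t w, \<pi> t (H t w))"
      by (rule vt[OF t1 Qfam(1)[OF QB t1] Qfam(1)[OF Qs t1] _ pt]) (use C in auto)
    have o: "AE w in M. \<forall>p\<in>Pol t. Qs t (H t w, p (H t w)) \<le> Qs t (H t w, \<pi>s t (H t w))"
      using opt t by auto
    have c2: "AE w in M. QB t (H t w, \<pi>B t (H t w)) = Qs t (H t w, \<pi>s t (H t w))" using C by simp
    show "AE w in M. QB t (H t w, \<pi> t (H t w)) \<le> QB t (H t w, \<pi>B t (H t w))"
      using v c2 o
    proof eventually_elim
      case (elim w) then show ?case using pt by force
    qed
  qed
  have "ipw \<pi> \<le> (\<integral>w. QB 1 (H 1 w, \<pi> 1 (H 1 w)) \<partial>M)" by (rule B_ineq[OF \<pi> \<pi>B' QB le])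
  also have "\<dots> \<le> (\<integral>w. QB 1 (H 1 w, \<pi>B 1 (H 1 w)) \<partial>M)" using bi \<pi> T1 by auto
  also have "\<dots> = ipw \<pi>B" by (rule B_eq[OF \<pi>B QB, symmetric])
  finally show ?thesis .
qed

end


context dtr begin

abbreviation "VM j \<equiv> (Pi\<^sub>M {j..T} (\<lambda>_. borel :: real measure) \<Otimes>\<^sub>M Pi\<^sub>M {j<..T} (\<lambda>_. SM))"

lemma V_meas:
  assumes j: "j \<in> {1..T}" and as: "as \<in> act_seqs d T"
  shows "pot_vec Y S T j as \<in> measurable M (VM j)"
proof -
  have eq: "pot_vec Y S T j as = (\<lambda>w. ((\<lambda>s\<in>{j..T}. Y s (take s as) w), (\<lambda>s\<in>{j<..T}. S s (take (s - 1) as) w)))"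
    by (rule ext) (simp add: pot_vec_def)
  show ?thesis unfolding eq
  proof (rule measurable_Pair)
    show "(\<lambda>w. \<lambda>s\<in>{j..T}. Y s (take s as) w) \<in> measurable M (Pi\<^sub>M {j..T} (\<lambda>_. borel))"
    proof (rule measurable_restrict)
      fix s assume s: "s \<in> {j..T}"
      show "Y s (take s as) \<in> borel_measurable M"
        by (rule borel_measurable_integrable, rule Yint) (use s j as in \<open>auto intro: act_seqs_take\<close>)
    qed
    show "(\<lambda>w. \<lambda>s\<in>{j<..T}. S s (take (s - 1) as) w) \<in> measurable M (Pi\<^sub>M {j<..T} (\<lambda>_. SM))"
    proof (rule measurable_restrict)
      fix s assume s: "s \<in> {j<..T}"
      show "S s (take (s - 1) as) \<in> measurable M SM"
        by (rule Smeas) (use s j as in \<open>auto intro: act_seqs_take\<close>)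
    qed
  qed
qed

lemma CI:
  assumes j: "j \<in> {1..T}" and as: "as \<in> act_seqs d T"
    and G: "G \<in> borel_measurable (HA j)" and Gb: "\<And>w. w \<in> space M \<Longrightarrow> 0 \<le> G w \<and> G w \<le> B"
    and Ge: "AE w in M. G w \<noteq> 0 \<longrightarrow> \<eta> \<le> e j a w"
    and f: "f \<in> borel_measurable (HM SM j \<Otimes>\<^sub>M VM j)"
  shows "(\<integral>w. G w * f (H j w, pot_vec Y S T j as w) \<partial>M) =
    (\<integral>w. G w * ((if \<eta> \<le> e j a w then 1 / e j a w else 0) * indicator {x\<in>space M. A j x = a} w) * f (H j w, pot_vec Y S T j as w) \<partial>M)"
proof -
  have jT: "j \<le> T" using j by auto
  define N where "N = HM SM j \<Otimes>\<^sub>M VM j"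
  define V where "V = pot_vec Y S T j as"
  define \<Phi> where "\<Phi> w = (H j w, V w)" for w
  have Vm: "V \<in> measurable M (VM j)" unfolding V_def by (rule V_meas[OF j as])
  have Hm: "H j \<in> measurable M (HM SM j)" by (rule H_meas[OF jT])
  have \<Phi>m: "\<Phi> \<in> measurable M N" unfolding \<Phi>_def[abs_def] N_def using Hm Vm by measurable
  define r' where "r' w = (if \<eta> \<le> e j a w then 1 / e j a w else 0)" for w
  have r'm: "r' \<in> borel_measurable (HA j)" unfolding r'_def[abs_def] by measurable
  have r'b: "0 \<le> r' w \<and> r' w \<le> 1 / \<eta>" for w using eta by (auto simp: r'_def field_simps)
  let ?Ind = "indicator {x\<in>space M. A j x = a} :: 'w \<Rightarrow> real"
  have Indm: "?Ind \<in> borel_measurable M" using Aset_sets[OF j] by measurable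
  have GM: "G \<in> borel_measurable M" by (rule HA_to_M[OF jT G])
  have r'M: "r' \<in> borel_measurable M" by (rule HA_to_M[OF jT r'm])
  define g2 where "g2 w = G w * (r' w * ?Ind w)" for w
  have g2m: "g2 \<in> borel_measurable M" unfolding g2_def[abs_def] using GM r'M Indm by measurable
  have g2b: "w \<in> space M \<Longrightarrow> 0 \<le> g2 w \<and> g2 w \<le> B * (1 / \<eta>)" for w
  proof -
    assume w: "w \<in> space M"
    have B0: "0 \<le> B" using Gb[OF w] by auto
    have "G w * r' w \<le> B * (1 / \<eta>)" by (rule mult_mono) (use Gb[OF w] r'b[of w] in auto)
    moreover have "0 \<le> B * (1 / \<eta>)" using B0 eta by simp
    ultimately show ?thesis using Gb[OF w] r'b[of w] unfolding g2_def by (auto simp: indicator_def)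
  qed
  interpret sf: sigma_finite_subalgebra M "HA j" by (rule HA_sf[OF jT])
  have rect: "(\<integral>w. G w * (indicator Bs (H j w) * indicator Cs (V w)) \<partial>M) = (\<integral>w. g2 w * (indicator Bs (H j w) * indicator Cs (V w)) \<partial>M)"
    if Bs: "Bs \<in> sets (HM SM j)" and Cs: "Cs \<in> sets (VM j)" for Bs Cs
  proof -
    define K where "K w = G w * indicator Bs (H j w)" for w
    have Km: "K \<in> borel_measurable (HA j)" unfolding K_def[abs_def] using G H_meas_HA[OF jT] Bs by measurable
    have KM: "K \<in> borel_measurable M" by (rule HA_to_M[OF jT Km])
    have Kb: "w \<in> space M \<Longrightarrow> 0 \<le> K w \<and> K w \<le> B" for w using Gb[of w] by (auto simp: K_def indicator_def)
    define E1 where "E1 = V -` Cs \<inter> space M"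
    define E2 where "E2 = A j -` {a} \<inter> space M"
    have E1s: "E1 \<in> sets M" unfolding E1_def by (rule measurable_sets[OF Vm Cs])
    have E2s: "E2 \<in> sets M" unfolding E2_def by (rule measurable_sets[OF Ameas[OF j]]) simp
    have E2eq: "E2 = {x\<in>space M. A j x = a}" unfolding E2_def by auto
    have ci: "AE w in M. real_cond_exp M (HA j) (indicator (E1 \<inter> E2)) w =
        real_cond_exp M (HA j) (indicator E1) w * real_cond_exp M (HA j) (indicator E2) w"
    proof -
      have "cond_indep M (HA j) (vimage_algebra (space M) V (VM j)) (vimage_algebra (space M) (A j) (count_space UNIV))"
        using si j as unfolding seq_ignorability_def V_def by auto
      moreover have "E1 \<in> sets (vimage_algebra (space M) V (VM j))" unfolding E1_def by (rule in_vimage_algebra[OF Cs])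
      moreover have "E2 \<in> sets (vimage_algebra (space M) (A j) (count_space UNIV))" unfolding E2_def by (rule in_vimage_algebra) simp
      ultimately show ?thesis unfolding cond_indep_def by blast
    qed
    have bint: "integrable M h" if "h \<in> borel_measurable M" "\<And>w. w \<in> space M \<Longrightarrow> \<bar>h w\<bar> \<le> C" for h :: "'w \<Rightarrow> real" and C
      by (rule integrable_const_bound[where B=C]) (use that in auto)
    have i1: "integrable M (\<lambda>w. (K w * r' w) * indicator (E1 \<inter> E2) w)"
    proof (rule bint[of _ "B * (1/\<eta>)"])
      show "(\<lambda>w. (K w * r' w) * indicator (E1 \<inter> E2) w) \<in> borel_measurable M" using KM r'M E1s E2s by measurable
      fix w assume w: "w \<in> space M"
      have B0: "0 \<le> B" using Kb[OF w] by auto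
      have "K w * r' w \<le> B * (1 / \<eta>)" by (rule mult_mono) (use Kb[OF w] r'b[of w] in auto)
      moreover have "0 \<le> B * (1 / \<eta>)" using B0 eta by simp
      ultimately show "\<bar>K w * r' w * indicator (E1 \<inter> E2) w\<bar> \<le> B * (1/\<eta>)"
        using Kb[OF w] r'b[of w] by (auto simp: indicator_def)
    qed
    have i2: "integrable M (\<lambda>w. K w * indicator E1 w)"
    proof (rule bint[of _ B])
      show "(\<lambda>w. K w * indicator E1 w) \<in> borel_measurable M" using KM E1s by measurable
      fix w assume w: "w \<in> space M"
      show "\<bar>K w * indicator E1 w\<bar> \<le> B" using Kb[OF w] by (auto simp: indicator_def)
    qed
    have "(\<integral>w. g2 w * (indicator Bs (H j w) * indicator Cs (V w)) \<partial>M) = (\<integral>w. (K w * r' w) * indicator (E1 \<inter> E2) w \<partial>M)"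
      by (rule Bochner_Integration.integral_cong[OF refl]) (auto simp: g2_def K_def E1_def E2_def indicator_def)
    also have "\<dots> = (\<integral>w. (K w * r' w) * real_cond_exp M (HA j) (indicator (E1 \<inter> E2)) w \<partial>M)"
      by (rule sf.real_cond_exp_intg(2)[symmetric, OF i1]) (use Km r'm E1s E2s in measurable)
    also have "\<dots> = (\<integral>w. K w * real_cond_exp M (HA j) (indicator E1) w \<partial>M)"
    proof (rule integral_cong_AE)
      show "(\<lambda>w. K w * r' w * real_cond_exp M (HA j) (indicator (E1 \<inter> E2)) w) \<in> borel_measurable M"
        using KM r'M by measurable
      show "(\<lambda>w. K w * real_cond_exp M (HA j) (indicator E1) w) \<in> borel_measurable M" using KM by measurable
      show "AE w in M. K w * r' w * real_cond_exp M (HA j) (indicator (E1 \<inter> E2)) w = K w * real_cond_exp M (HA j) (indicator E1) w"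
        using ci Ge
      proof eventually_elim
        case (elim w)
        show ?case
        proof (cases "K w = 0")
          case False
          then have "G w \<noteq> 0" by (auto simp: K_def)
          then have "\<eta> \<le> e j a w" using elim by auto
          then have "r' w * e j a w = 1" using eta by (auto simp: r'_def)
          then show ?thesis using elim(1) by (simp add: E2eq mult_ac)
        qed simp
      qed
    qed
    also have "\<dots> = (\<integral>w. K w * indicator E1 w \<partial>M)"
      by (rule sf.real_cond_exp_intg(2)[OF i2 Km]) (use E1s in measurable)
    also have "\<dots> = (\<integral>w. G w * (indicator Bs (H j w) * indicator Cs (V w)) \<partial>M)"
      by (rule Bochner_Integration.integral_cong[OF refl]) (auto simp: K_def E1_def indicator_def)
    finally show ?thesis by simp
  qed
  have em: "emeasure (distr (density M (\<lambda>w. ennreal (g w))) N \<Phi>) (Bs \<times> Cs) = ennreal (\<integral>w. g w * (indicator Bs (H j w) * indicator Cs (V w)) \<partial>M)"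
    if gm: "g \<in> borel_measurable M" and gb: "\<And>w. w \<in> space M \<Longrightarrow> 0 \<le> g w \<and> g w \<le> C"
      and Bs: "Bs \<in> sets (HM SM j)" and Cs: "Cs \<in> sets (VM j)" for g C Bs Cs
  proof -
    have BC: "Bs \<times> Cs \<in> sets N" unfolding N_def using Bs Cs by simp
    have pre: "\<Phi> -` (Bs \<times> Cs) \<inter> space M \<in> sets M" by (rule measurable_sets[OF \<Phi>m BC])
    have "emeasure (distr (density M (\<lambda>w. ennreal (g w))) N \<Phi>) (Bs \<times> Cs) = emeasure (density M (\<lambda>w. ennreal (g w))) (\<Phi> -` (Bs \<times> Cs) \<inter> space M)"
      by (subst emeasure_distr) (use \<Phi>m BC in auto)
    also have "\<dots> = (\<integral>\<^sup>+w. ennreal (g w) * indicator (\<Phi> -` (Bs \<times> Cs) \<inter> space M) w \<partial>M)"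
      by (rule emeasure_density[OF _ pre]) (use gm in measurable)
    also have "\<dots> = (\<integral>\<^sup>+w. ennreal (g w * (indicator Bs (H j w) * indicator Cs (V w))) \<partial>M)"
      by (rule nn_integral_cong) (auto simp: \<Phi>_def indicator_def)
    also have "\<dots> = ennreal (\<integral>w. g w * (indicator Bs (H j w) * indicator Cs (V w)) \<partial>M)"
    proof (rule nn_integral_eq_integral)
      show "integrable M (\<lambda>w. g w * (indicator Bs (H j w) * indicator Cs (V w)))"
      proof (rule integrable_const_bound[where B=C])
        show "AE w in M. norm (g w * (indicator Bs (H j w) * indicator Cs (V w))) \<le> C"
        proof -
          obtain w0 where "w0 \<in> space M" using not_empty by auto
          then have C0: "0 \<le> C" using gb[of w0] by auto
          show ?thesis using gb C0 by (auto simp: indicator_def intro!: AE_I2)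
        qed
        show "(\<lambda>w. g w * (indicator Bs (H j w) * indicator Cs (V w))) \<in> borel_measurable M"
          using gm Hm Vm Bs Cs by measurable
      qed
      show "AE w in M. 0 \<le> g w * (indicator Bs (H j w) * indicator Cs (V w))"
        using gb by (auto simp: indicator_def intro!: AE_I2)
    qed
    finally show ?thesis .
  qed
  have meq: "distr (density M (\<lambda>w. ennreal (G w))) N \<Phi> = distr (density M (\<lambda>w. ennreal (g2 w))) N \<Phi>"
  proof (rule measure_eqI_generator_eq[OF Int_stable_pair_measure_generator[of "HM SM j" "VM j"]])
    show "{a \<times> b |a b. a \<in> sets (HM SM j) \<and> b \<in> sets (VM j)} \<subseteq> Pow (space (HM SM j) \<times> space (VM j))"
      by (auto dest: sets.sets_into_space)
    show "sets (distr (density M (\<lambda>w. ennreal (G w))) N \<Phi>) = sigma_sets (space (HM SM j) \<times> space (VM j)) {a \<times> b |a b. a \<in> sets (HM SM j) \<and> b \<in> sets (VM j)}"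
      by (simp add: N_def sets_pair_measure)
    show "sets (distr (density M (\<lambda>w. ennreal (g2 w))) N \<Phi>) = sigma_sets (space (HM SM j) \<times> space (VM j)) {a \<times> b |a b. a \<in> sets (HM SM j) \<and> b \<in> sets (VM j)}"
      by (simp add: N_def sets_pair_measure)
    fix X assume "X \<in> {a \<times> b |a b. a \<in> sets (HM SM j) \<and> b \<in> sets (VM j)}"
    then obtain Bs Cs where X: "X = Bs \<times> Cs" "Bs \<in> sets (HM SM j)" "Cs \<in> sets (VM j)" by auto
    show "emeasure (distr (density M (\<lambda>w. ennreal (G w))) N \<Phi>) X = emeasure (distr (density M (\<lambda>w. ennreal (g2 w))) N \<Phi>) X"
      using em[OF GM Gb X(2,3)] em[OF g2m g2b X(2,3)] rect[OF X(2,3)] X(1) by simp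
  next
    show "range (\<lambda>i::nat. space (HM SM j) \<times> space (VM j)) \<subseteq> {a \<times> b |a b. a \<in> sets (HM SM j) \<and> b \<in> sets (VM j)}"
      by auto
    show "(\<Union>i::nat. space (HM SM j) \<times> space (VM j)) = space (HM SM j) \<times> space (VM j)" by simp
    fix i :: nat
    show "emeasure (distr (density M (\<lambda>w. ennreal (G w))) N \<Phi>) (space (HM SM j) \<times> space (VM j)) \<noteq> \<infinity>"
      using em[OF GM Gb sets.top sets.top] by simp
  qed
  have fm': "f \<in> borel_measurable N" unfolding N_def by (rule f)
  have "(\<integral>w. G w * f (\<Phi> w) \<partial>M) = (\<integral>x. f x \<partial>distr (density M (\<lambda>w. ennreal (G w))) N \<Phi>)"
    by (subst integral_distr) (use \<Phi>m fm' GM Gb in \<open>auto simp: integral_density\<close>)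
  also have "\<dots> = (\<integral>x. f x \<partial>distr (density M (\<lambda>w. ennreal (g2 w))) N \<Phi>)" by (simp only: meq)
  also have "\<dots> = (\<integral>w. g2 w * f (\<Phi> w) \<partial>M)"
    by (subst integral_distr) (use \<Phi>m fm' g2m g2b in \<open>auto simp: integral_density\<close>)
  finally show ?thesis by (simp add: \<Phi>_def V_def g2_def r'_def mult_ac)
qed

end


context dtr begin

lemma dpos: "t \<in> {1..T} \<Longrightarrow> 0 < d t"
proof -
  assume t: "t \<in> {1..T}"
  obtain w where "w \<in> space M" using not_empty by auto
  then show ?thesis using Abnd[OF t] by fastforce
qed

definition ext_as :: "nat list \<Rightarrow> nat list" where
  "ext_as as = as @ replicate (T - length as) 0"

lemma ext_as_in: "as \<in> act_seqs d t \<Longrightarrow> t \<le> T \<Longrightarrow> ext_as as \<in> act_seqs d T"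
  unfolding act_seqs_def ext_as_def
  by (auto simp: nth_append intro!: dpos)

lemma take_ext_as: "i \<le> length as \<Longrightarrow> take i (ext_as as) = take i as"
  by (simp add: ext_as_def)

definition phist :: "nat list \<Rightarrow> nat \<Rightarrow> nat \<Rightarrow> 's hist \<times> ((nat \<Rightarrow> real) \<times> (nat \<Rightarrow> 's)) \<Rightarrow> 's hist" where
  "phist as j s x = ((\<lambda>i\<in>{1..<s}. as ! (i - 1)), (\<lambda>i\<in>{1..s}. if i \<le> j then snd (fst x) i else snd (snd x) i))"

definition ff :: "(nat \<Rightarrow> 's hist \<Rightarrow> nat) \<Rightarrow> nat list \<Rightarrow> nat \<Rightarrow> nat \<Rightarrow> 's hist \<times> ((nat \<Rightarrow> real) \<times> (nat \<Rightarrow> 's)) \<Rightarrow> real" where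
  "ff \<pi> as t j x = fst (snd x) t * (\<Prod>s\<in>{j<..t}. if \<pi> s (phist as j s x) = as ! (s - 1) then 1 else 0)"

lemma phist_meas:
  assumes "s \<le> T" "j \<le> s"
  shows "phist as j s \<in> measurable (HM SM j \<Otimes>\<^sub>M VM j) (HM SM s)"
  unfolding phist_def[abs_def] HM_def
proof (rule measurable_Pair)
  show "(\<lambda>x. \<lambda>i\<in>{1..<s}. as ! (i - 1)) \<in> measurable ((Pi\<^sub>M {1..<j} (\<lambda>_. count_space UNIV) \<Otimes>\<^sub>M Pi\<^sub>M {1..j} (\<lambda>_. SM)) \<Otimes>\<^sub>M VM j) (Pi\<^sub>M {1..<s} (\<lambda>_. count_space UNIV))"
    by (rule measurable_const) (simp add: space_PiM)
  show "(\<lambda>x. \<lambda>i\<in>{1..s}. if i \<le> j then snd (fst x) i else snd (snd x) i) \<in> measurable ((Pi\<^sub>M {1..<j} (\<lambda>_. count_space UNIV) \<Otimes>\<^sub>M Pi\<^sub>M {1..j} (\<lambda>_. SM)) \<Otimes>\<^sub>M VM j) (Pi\<^sub>M {1..s} (\<lambda>_. SM))"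
  proof (rule measurable_restrict)
    fix i assume i: "i \<in> {1..s}"
    show "(\<lambda>x. if i \<le> j then snd (fst x) i else snd (snd x) i) \<in> measurable ((Pi\<^sub>M {1..<j} (\<lambda>_. count_space UNIV) \<Otimes>\<^sub>M Pi\<^sub>M {1..j} (\<lambda>_. SM)) \<Otimes>\<^sub>M VM j) SM"
    proof (cases "i \<le> j")
      case True
      have "(\<lambda>x. snd (fst x) i) \<in> measurable ((Pi\<^sub>M {1..<j} (\<lambda>_. count_space UNIV) \<Otimes>\<^sub>M Pi\<^sub>M {1..j} (\<lambda>_. SM)) \<Otimes>\<^sub>M VM j) SM"
        by (intro measurable_compose[OF measurable_fst] measurable_compose[OF measurable_snd] measurable_component_singleton) (use i True in auto)
      then show ?thesis using True by simp
    next
      case False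
      have "(\<lambda>x. snd (snd x) i) \<in> measurable ((Pi\<^sub>M {1..<j} (\<lambda>_. count_space UNIV) \<Otimes>\<^sub>M Pi\<^sub>M {1..j} (\<lambda>_. SM)) \<Otimes>\<^sub>M VM j) SM"
        by (intro measurable_compose[OF measurable_snd] measurable_compose[OF measurable_snd] measurable_component_singleton) (use i False assms in auto)
      then show ?thesis using False by simp
    qed
  qed
qed

lemma ff_meas:
  assumes "t \<le> T" "j \<le> t" "\<forall>s\<in>{1..T}. \<pi> s \<in> Pol s" "1 \<le> j"
  shows "ff \<pi> as t j \<in> borel_measurable (HM SM j \<Otimes>\<^sub>M VM j)"
proof -
  have 1: "(\<lambda>x. fst (snd x) t) \<in> borel_measurable (HM SM j \<Otimes>\<^sub>M VM j)"
    by (intro measurable_compose[OF measurable_snd] measurable_compose[OF measurable_fst] measurable_component_singleton) (use assms in auto)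
  have 2: "(\<lambda>x. if \<pi> s (phist as j s x) = as ! (s - 1) then 1 else 0 :: real) \<in> borel_measurable (HM SM j \<Otimes>\<^sub>M VM j)"
    if s: "s \<in> {j<..t}" for s
  proof -
    have "(\<lambda>x. \<pi> s (phist as j s x)) \<in> measurable (HM SM j \<Otimes>\<^sub>M VM j) (count_space UNIV)"
      by (rule measurable_compose[OF phist_meas pol_meas]) (use s assms in auto)
    then have "{x \<in> space (HM SM j \<Otimes>\<^sub>M VM j). \<pi> s (phist as j s x) = as ! (s - 1)} \<in> sets (HM SM j \<Otimes>\<^sub>M VM j)"
      by (rule pred_eq_nat) simp
    then show ?thesis by measurable
  qed
  show ?thesis unfolding ff_def[abs_def] using 1 2 by (intro borel_measurable_times borel_measurable_prod) auto
qed

lemma obs_acts_prefix: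
  assumes "\<forall>s\<in>{1..k}. A s w = as ! (s - 1)" "i \<le> k" "k \<le> length as"
  shows "obs_acts A i w = take i as"
  using assms by (intro nth_equalityI) (auto simp: obs_acts_nth)

lemma pot_hist_prefix:
  assumes "\<forall>s\<in>{1..k}. A s w = as ! (s - 1)" "k \<le> length as"
  shows "pot_hist S (Suc k) (take k as) w = H (Suc k) w"
  unfolding obs_hist_def using obs_acts_prefix[OF assms(1) _ assms(2), of k] by simp

lemma ff_eq:
  assumes pre: "\<forall>s\<in>{1..k}. A s w = as ! (s - 1)" and t: "t \<le> T" "length as = t" "k < t"
  shows "Y t as w * (\<Prod>s\<in>{Suc k<..t}. if \<pi> s (pot_hist S s (take (s - 1) as) w) = as ! (s - 1) then 1 else 0)
       = ff \<pi> as t (Suc k) (H (Suc k) w, pot_vec Y S T (Suc k) (ext_as as) w)"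
proof -
  have "pot_hist S s (take (s - 1) as) w = phist as (Suc k) s (H (Suc k) w, pot_vec Y S T (Suc k) (ext_as as) w)"
    if s: "s \<in> {Suc k<..t}" for s
  proof -
    have "(\<lambda>i\<in>{1..s}. S i (take (i - 1) (take (s - 1) as)) w) = (\<lambda>i\<in>{1..s}. if i \<le> Suc k then snd (H (Suc k) w) i else snd (pot_vec Y S T (Suc k) (ext_as as) w) i)"
    proof (rule ext)
      fix i show "(\<lambda>i\<in>{1..s}. S i (take (i - 1) (take (s - 1) as)) w) i = (\<lambda>i\<in>{1..s}. if i \<le> Suc k then snd (H (Suc k) w) i else snd (pot_vec Y S T (Suc k) (ext_as as) w) i) i"
      proof (cases "i \<in> {1..s}")
        case True
        have "i - 1 \<le> s - 1" using True by auto
        then have tk: "take (i - 1) (take (s - 1) as) = take (i - 1) as" by (simp add: take_take min_absorb1)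
        show ?thesis
        proof (cases "i \<le> Suc k")
          case True2: True
          have "obs_acts A (i - 1) w = take (i - 1) as" by (rule obs_acts_prefix[OF pre]) (use True2 t in auto)
          then show ?thesis using True True2 tk by (simp add: obs_hist_eq)
        next
          case False
          have "take (i - 1) (ext_as as) = take (i - 1) as" by (rule take_ext_as) (use True s t in auto)
          then show ?thesis using True False tk s t by (simp add: pot_vec_def)
        qed
      next
        case False
        then show ?thesis by (simp only: restrict_def if_False)
      qed
    qed
    moreover have "(\<lambda>i\<in>{1..<s}. take (s - 1) as ! (i - 1)) = (\<lambda>i\<in>{1..<s}. as ! (i - 1))"
      by (rule ext) auto
    moreover have "phist as (Suc k) s (H (Suc k) w, pot_vec Y S T (Suc k) (ext_as as) w) =
      ((\<lambda>i\<in>{1..<s}. as ! (i - 1)), (\<lambda>i\<in>{1..s}. if i \<le> Suc k then snd (H (Suc k) w) i else snd (pot_vec Y S T (Suc k) (ext_as as) w) i))"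
      by (simp only: phist_def fst_conv snd_conv)
    moreover have "pot_hist S s (take (s - 1) as) w = ((\<lambda>i\<in>{1..<s}. take (s - 1) as ! (i - 1)), (\<lambda>i\<in>{1..s}. S i (take (i - 1) (take (s - 1) as)) w))"
      by (simp only: pot_hist_def)
    ultimately show ?thesis by (simp only:)
  qed
  moreover have "fst (pot_vec Y S T (Suc k) (ext_as as) w) t = Y t as w"
    using t take_ext_as[of t as] by (simp add: pot_vec_def)
  ultimately show ?thesis unfolding ff_def by (intro arg_cong2[where f="(*)"] prod.cong) auto
qed

end


context dtr begin

definition rhoa :: "(nat \<Rightarrow> 's hist \<Rightarrow> nat) \<Rightarrow> nat \<Rightarrow> nat list \<Rightarrow> 'w \<Rightarrow> real" where
  "rhoa \<pi> s as w = (if A s w = as ! (s - 1) \<and> \<pi> s (H s w) = as ! (s - 1) then rr s (\<pi> s) w else 0)"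

definition potind :: "(nat \<Rightarrow> 's hist \<Rightarrow> nat) \<Rightarrow> nat \<Rightarrow> nat list \<Rightarrow> 'w \<Rightarrow> real" where
  "potind \<pi> s as w = (if \<pi> s (pot_hist S s (take (s - 1) as) w) = as ! (s - 1) then 1 else 0)"

definition JJ :: "(nat \<Rightarrow> 's hist \<Rightarrow> nat) \<Rightarrow> nat \<Rightarrow> nat list \<Rightarrow> nat \<Rightarrow> real" where
  "JJ \<pi> t as k = (\<integral>w. Y t as w * (\<Prod>s\<in>{1..k}. rhoa \<pi> s as w) * (\<Prod>s\<in>{k<..t}. potind \<pi> s as w) \<partial>M)"

lemma rhoa_bnd: "0 \<le> rhoa \<pi> s as w" "rhoa \<pi> s as w \<le> 1 / \<eta>"
  using rr_bnd[of s "\<pi> s" w] eta by (auto simp: rhoa_def)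

lemma pred_const_nat: "f \<in> measurable N (count_space UNIV) \<Longrightarrow> {w \<in> space N. f w = (c::nat)} \<in> sets N"
  by (rule pred_eq_nat) auto

lemma rhoa_meas_HA:
  assumes "1 \<le> s" "s < j" "j \<le> T" "\<pi> s \<in> Pol s"
  shows "rhoa \<pi> s as \<in> borel_measurable (HA j)"
proof -
  have sT: "s \<in> {1..T}" using assms by auto
  have 1: "rr s (\<pi> s) \<in> borel_measurable (HA j)" by (rule HA_mono_meas[OF _ _ rr_meas[OF sT assms(4)]]) (use assms in auto)
  have 2: "{w \<in> space (HA j). \<pi> s (H s w) = as ! (s - 1)} \<in> sets (HA j)"
    by (rule pred_const_nat, rule HA_mono_meas[OF _ _ pol_H_meas_HA[OF sT assms(4)]]) (use assms in auto)
  have 3: "{w \<in> space (HA j). A s w = as ! (s - 1)} \<in> sets (HA j)"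
    by (rule pred_const_nat[OF As_meas_HA]) (use assms in auto)
  show ?thesis unfolding rhoa_def[abs_def] using 1 2 3 by measurable
qed

lemma rhoa_meas:
  assumes s: "s \<in> {1..T}" "\<pi> s \<in> Pol s"
  shows "rhoa \<pi> s as \<in> borel_measurable M"
proof -
  have sT: "s \<le> T" using s by auto
  have 1: "rr s (\<pi> s) \<in> borel_measurable M" by (rule HA_to_M[OF sT rr_meas[OF s]])
  have 2: "{w \<in> space M. \<pi> s (H s w) = as ! (s - 1)} \<in> sets M"
    by (rule pred_const_nat, rule HA_to_M[OF sT pol_H_meas_HA[OF s]])
  have 3: "{w \<in> space M. A s w = as ! (s - 1)} \<in> sets M"
    by (rule pred_const_nat[OF Ameas[OF s(1)]])
  show ?thesis unfolding rhoa_def[abs_def] using 1 2 3 by measurable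
qed

lemma potind_meas:
  assumes s: "s \<in> {1..T}" "\<pi> s \<in> Pol s" and as: "as \<in> act_seqs d t" "s \<le> t"
  shows "potind \<pi> s as \<in> borel_measurable M"
proof -
  have "(\<lambda>w. \<pi> s (pot_hist S s (take (s - 1) as) w)) \<in> measurable M (count_space UNIV)"
    by (rule measurable_compose[OF pot_hist_meas pol_meas[OF s]]) (use s as in \<open>auto intro: act_seqs_take\<close>)
  then have "{w \<in> space M. \<pi> s (pot_hist S s (take (s - 1) as) w) = as ! (s - 1)} \<in> sets M"
    by (rule pred_const_nat)
  then show ?thesis unfolding potind_def[abs_def] by measurable
qed

lemma J_step:
  assumes \<pi>: "\<forall>s\<in>{1..T}. \<pi> s \<in> Pol s" and as: "as \<in> act_seqs d t" and tT: "t \<le> T" and k: "k < t"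
  shows "JJ \<pi> t as k = JJ \<pi> t as (Suc k)"
proof -
  define j where "j = Suc k"
  have jT: "j \<in> {1..T}" using k tT by (auto simp: j_def)
  have lt: "length as = t" using as by (simp add: act_seqs_def)
  define a where "a = as ! k"
  define P where "P w = (\<Prod>s\<in>{1..k}. rhoa \<pi> s as w)" for w
  have Pm: "P \<in> borel_measurable (HA j)"
    unfolding P_def[abs_def] by (intro borel_measurable_prod rhoa_meas_HA) (use \<pi> jT in \<open>auto simp: j_def\<close>)
  have Pb: "0 \<le> P w \<and> P w \<le> (1 / \<eta>) ^ k" for w
  proof -
    have "P w \<le> (\<Prod>s\<in>{1..k}. 1 / \<eta>)" unfolding P_def by (intro prod_mono) (auto intro: rhoa_bnd)
    then show ?thesis unfolding P_def by (auto intro: prod_nonneg rhoa_bnd)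
  qed
  have Ppre: "\<forall>s\<in>{1..k}. A s w = as ! (s - 1)" if "P w \<noteq> 0" for w
  proof
    fix s assume s: "s \<in> {1..k}"
    have "rhoa \<pi> s as w \<noteq> 0" using that s by (auto simp: P_def)
    then show "A s w = as ! (s - 1)" by (auto simp: rhoa_def split: if_splits)
  qed
  define G where "G w = P w * (if \<pi> j (H j w) = a then 1 else 0)" for w
  have pj: "\<pi> j \<in> Pol j" using \<pi> jT by auto
  have Gm: "G \<in> borel_measurable (HA j)"
  proof -
    have "{w \<in> space (HA j). \<pi> j (H j w) = a} \<in> sets (HA j)" by (rule pred_const_nat[OF pol_H_meas_HA[OF jT pj]])
    then show ?thesis unfolding G_def[abs_def] using Pm by measurable
  qed
  have Gb: "0 \<le> G w \<and> G w \<le> (1 / \<eta>) ^ k" for w using Pb[of w] by (auto simp: G_def)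
  have Ge: "AE w in M. G w \<noteq> 0 \<longrightarrow> \<eta> \<le> e j a w"
    using ovl_pol[OF jT pj] by eventually_elim (auto simp: G_def)
  have as': "ext_as as \<in> act_seqs d T" by (rule ext_as_in[OF as tT])
  have ffm: "ff \<pi> as t j \<in> borel_measurable (HM SM j \<Otimes>\<^sub>M VM j)"
    by (rule ff_meas) (use tT k \<pi> in \<open>auto simp: j_def\<close>)
  note ci = CI[OF jT as' Gm Gb Ge ffm]
  let ?ff = "\<lambda>w. ff \<pi> as t j (H j w, pot_vec Y S T j (ext_as as) w)"
  have ins: "{k<..t} = insert j {j<..t}" using k by (auto simp: j_def)
  have L: "JJ \<pi> t as k = (\<integral>w. G w * ?ff w \<partial>M)"
    unfolding JJ_def
  proof (rule Bochner_Integration.integral_cong[OF refl])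
    fix w assume w: "w \<in> space M"
    show "Y t as w * (\<Prod>s\<in>{1..k}. rhoa \<pi> s as w) * (\<Prod>s\<in>{k<..t}. potind \<pi> s as w) = G w * ?ff w"
    proof (cases "P w = 0")
      case True
      then have "(\<Prod>s\<in>{1..k}. rhoa \<pi> s as w) = 0" by (simp only: P_def)
      then show ?thesis using True by (simp only: G_def mult_zero_left mult_zero_right)
    next
      case False
      note pre = Ppre[OF False]
      have ph: "pot_hist S j (take k as) w = H j w" unfolding j_def by (rule pot_hist_prefix[OF pre]) (use lt k in auto)
      have "(\<Prod>s\<in>{k<..t}. potind \<pi> s as w) = potind \<pi> j as w * (\<Prod>s\<in>{j<..t}. potind \<pi> s as w)"
        unfolding ins by (subst prod.insert) auto
      also have "potind \<pi> j as w = (if \<pi> j (H j w) = a then 1 else 0)"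
        using ph by (simp add: potind_def j_def a_def)
      finally have pe: "(\<Prod>s\<in>{k<..t}. potind \<pi> s as w) = (if \<pi> j (H j w) = a then 1 else 0) * (\<Prod>s\<in>{j<..t}. potind \<pi> s as w)" .
      have fe: "Y t as w * (\<Prod>s\<in>{j<..t}. potind \<pi> s as w) = ?ff w"
        unfolding potind_def j_def by (rule ff_eq[OF pre tT lt k])
      show ?thesis using fe unfolding pe G_def P_def[symmetric] by (simp add: mult_ac)
    qed
  qed
  have R: "JJ \<pi> t as (Suc k) = (\<integral>w. G w * ((if \<eta> \<le> e j a w then 1 / e j a w else 0) * indicator {x\<in>space M. A j x = a} w) * ?ff w \<partial>M)"
    unfolding JJ_def
  proof (rule Bochner_Integration.integral_cong[OF refl])
    fix w assume w: "w \<in> space M"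
    have pr: "(\<Prod>s\<in>{1..Suc k}. rhoa \<pi> s as w) = P w * rhoa \<pi> j as w" by (simp add: P_def prod.cl_ivl_Suc j_def)
    show "Y t as w * (\<Prod>s\<in>{1..Suc k}. rhoa \<pi> s as w) * (\<Prod>s\<in>{Suc k<..t}. potind \<pi> s as w) =
        G w * ((if \<eta> \<le> e j a w then 1 / e j a w else 0) * indicator {x\<in>space M. A j x = a} w) * ?ff w"
    proof (cases "P w = 0")
      case True
      then show ?thesis by (simp only: pr G_def True mult_zero_left mult_zero_right)
    next
      case False
      note pre = Ppre[OF False]
      have fe: "Y t as w * (\<Prod>s\<in>{j<..t}. potind \<pi> s as w) = ?ff w"
        unfolding potind_def j_def by (rule ff_eq[OF pre tT lt k])
      have re: "rhoa \<pi> j as w = (if \<pi> j (H j w) = a then 1 else 0) * ((if \<eta> \<le> e j a w then 1 / e j a w else 0) * indicator {x\<in>space M. A j x = a} w)"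
        using w by (auto simp: rhoa_def rr_def j_def a_def indicator_def)
      show ?thesis unfolding pr re G_def using fe[symmetric] by (simp add: j_def mult_ac)
    qed
  qed
  show ?thesis unfolding L R using ci .
qed

lemma J_chain:
  assumes \<pi>: "\<forall>s\<in>{1..T}. \<pi> s \<in> Pol s" and as: "as \<in> act_seqs d t" and tT: "t \<le> T"
  shows "k \<le> t \<Longrightarrow> JJ \<pi> t as 0 = JJ \<pi> t as k"
proof (induction k)
  case (Suc k)
  then show ?case using J_step[OF \<pi> as tT, of k] by simp
qed simp

end


context dtr begin

lemma prod_rhoa:
  assumes w: "w \<in> space M" and as: "as \<in> act_seqs d t" and tT: "t \<le> T"
  shows "(\<Prod>s\<in>{1..t}. rhoa \<pi> s as w) = (if obs_acts A t w = as then ww \<pi> t w else 0)"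
proof (cases "obs_acts A t w = as")
  case True
  have "(\<Prod>s\<in>{1..t}. rhoa \<pi> s as w) = (\<Prod>s\<in>{1..t}. rho s (\<pi> s) w)"
  proof (rule prod.cong[OF refl])
    fix s assume s: "s \<in> {1..t}"
    have "A s w = as ! (s - 1)" using obs_acts_nth[of "s - 1" t A w] s True by auto
    then show "rhoa \<pi> s as w = rho s (\<pi> s) w" by (auto simp: rhoa_def rho_def)
  qed
  then show ?thesis using True by (simp add: ww_def)
next
  case False
  have l: "length as = t" using as by (simp add: act_seqs_def)
  obtain i where i: "i < t" "obs_acts A t w ! i \<noteq> as ! i"
    using False l by (metis nth_equalityI obs_acts_length)
  have "A (Suc i) w \<noteq> as ! (Suc i - 1)" using i obs_acts_nth[of i t A w] by simp
  then have "rhoa \<pi> (Suc i) as w = 0" by (simp add: rhoa_def)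
  moreover have "Suc i \<in> {1..t}" using i by auto
  ultimately have "(\<Prod>s\<in>{1..t}. rhoa \<pi> s as w) = 0" by (intro prod_zero) auto
  then show ?thesis using False by simp
qed

lemma welfare_ipw:
  assumes \<pi>: "\<forall>s\<in>{1..T}. \<pi> s \<in> Pol s"
  shows "welfare M d Y S T \<pi> = ipw \<pi>"
proof -
  have pint: "integrable M (\<lambda>w. Y t as w * (\<Prod>s\<in>{1..t}. potind \<pi> s as w))"
    if t: "t \<in> {1..T}" and as: "as \<in> act_seqs d t" for t as
  proof -
    have "integrable M (\<lambda>w. (\<Prod>s\<in>{1..t}. potind \<pi> s as w) * Y t as w)"
    proof (rule int_bnd[OF Yint[OF t as]])
      show "(\<lambda>w. \<Prod>s\<in>{1..t}. potind \<pi> s as w) \<in> borel_measurable M"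
        by (intro borel_measurable_prod potind_meas[OF _ _ as]) (use t \<pi> in auto)
      show "\<bar>\<Prod>s\<in>{1..t}. potind \<pi> s as w\<bar> \<le> 1" for w
        by (auto simp: potind_def abs_prod intro!: prod_le_1)
    qed
    then show ?thesis by (simp add: mult_ac)
  qed
  have rint: "integrable M (\<lambda>w. Y t as w * (\<Prod>s\<in>{1..t}. rhoa \<pi> s as w))"
    if t: "t \<in> {1..T}" and as: "as \<in> act_seqs d t" for t as
  proof -
    have "integrable M (\<lambda>w. (\<Prod>s\<in>{1..t}. rhoa \<pi> s as w) * Y t as w)"
    proof (rule int_bnd[OF Yint[OF t as]])
      show "(\<lambda>w. \<Prod>s\<in>{1..t}. rhoa \<pi> s as w) \<in> borel_measurable M"
        by (intro borel_measurable_prod rhoa_meas) (use t \<pi> in auto)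
      show "\<bar>\<Prod>s\<in>{1..t}. rhoa \<pi> s as w\<bar> \<le> (1 / \<eta>) ^ t" for w
      proof -
        have "\<bar>\<Prod>s\<in>{1..t}. rhoa \<pi> s as w\<bar> = (\<Prod>s\<in>{1..t}. rhoa \<pi> s as w)"
          by (intro abs_of_nonneg prod_nonneg) (auto intro: rhoa_bnd)
        also have "\<dots> \<le> (\<Prod>s\<in>{1..t}. 1 / \<eta>)" by (intro prod_mono) (auto intro: rhoa_bnd)
        finally show ?thesis by simp
      qed
    qed
    then show ?thesis by (simp add: mult_ac)
  qed
  have tm: "(\<integral>w. Y t as w * (\<Prod>s\<in>{1..t}. potind \<pi> s as w) \<partial>M) = (\<integral>w. Y t as w * (\<Prod>s\<in>{1..t}. rhoa \<pi> s as w) \<partial>M)"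
    if t: "t \<in> {1..T}" and as: "as \<in> act_seqs d t" for t as
  proof -
    have e0: "{0<..t} = {1..t}" by auto
    have "(\<integral>w. Y t as w * (\<Prod>s\<in>{1..t}. potind \<pi> s as w) \<partial>M) = JJ \<pi> t as 0"
      by (simp add: JJ_def e0)
    also have "\<dots> = JJ \<pi> t as t" by (rule J_chain[OF \<pi> as]) (use t in auto)
    also have "\<dots> = (\<integral>w. Y t as w * (\<Prod>s\<in>{1..t}. rhoa \<pi> s as w) \<partial>M)" by (simp add: JJ_def)
    finally show ?thesis .
  qed
  have "welfare M d Y S T \<pi> = (\<integral>w. (\<Sum>t\<in>{1..T}. \<Sum>as\<in>act_seqs d t. Y t as w * (\<Prod>s\<in>{1..t}. potind \<pi> s as w)) \<partial>M)"
    by (simp add: welfare_def potind_def)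
  also have "\<dots> = (\<Sum>t\<in>{1..T}. \<integral>w. (\<Sum>as\<in>act_seqs d t. Y t as w * (\<Prod>s\<in>{1..t}. potind \<pi> s as w)) \<partial>M)"
    by (rule Bochner_Integration.integral_sum) (use pint in auto)
  also have "\<dots> = (\<Sum>t\<in>{1..T}. \<Sum>as\<in>act_seqs d t. \<integral>w. Y t as w * (\<Prod>s\<in>{1..t}. potind \<pi> s as w) \<partial>M)"
    by (intro sum.cong refl Bochner_Integration.integral_sum) (use pint in auto)
  also have "\<dots> = (\<Sum>t\<in>{1..T}. \<Sum>as\<in>act_seqs d t. \<integral>w. Y t as w * (\<Prod>s\<in>{1..t}. rhoa \<pi> s as w) \<partial>M)"
    by (intro sum.cong refl tm) auto
  also have "\<dots> = (\<Sum>t\<in>{1..T}. \<integral>w. (\<Sum>as\<in>act_seqs d t. Y t as w * (\<Prod>s\<in>{1..t}. rhoa \<pi> s as w)) \<partial>M)"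
    by (intro sum.cong refl Bochner_Integration.integral_sum[symmetric]) (use rint in auto)
  also have "\<dots> = (\<Sum>t\<in>{1..T}. \<integral>w. ww \<pi> t w * obs_Y Y A t w \<partial>M)"
  proof (rule sum.cong[OF refl])
    fix t assume t: "t \<in> {1..T}"
    have tT: "t \<le> T" using t by auto
    show "(\<integral>w. (\<Sum>as\<in>act_seqs d t. Y t as w * (\<Prod>s\<in>{1..t}. rhoa \<pi> s as w)) \<partial>M) = (\<integral>w. ww \<pi> t w * obs_Y Y A t w \<partial>M)"
    proof (rule Bochner_Integration.integral_cong[OF refl])
    fix w assume w: "w \<in> space M"
    have "(\<Sum>as\<in>act_seqs d t. Y t as w * (\<Prod>s\<in>{1..t}. rhoa \<pi> s as w)) = (\<Sum>as\<in>act_seqs d t. if obs_acts A t w = as then Y t as w * ww \<pi> t w else 0)"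
    proof (rule sum.cong[OF refl])
      fix as assume as: "as \<in> act_seqs d t"
      show "Y t as w * (\<Prod>s\<in>{1..t}. rhoa \<pi> s as w) = (if obs_acts A t w = as then Y t as w * ww \<pi> t w else 0)"
        by (subst prod_rhoa[OF w as tT]) simp
    qed
    also have "\<dots> = Y t (obs_acts A t w) w * ww \<pi> t w"
      using obs_acts_in[OF tT w] finite_act_seqs by (simp add: sum.delta)
    finally show "(\<Sum>as\<in>act_seqs d t. Y t as w * (\<Prod>s\<in>{1..t}. rhoa \<pi> s as w)) = ww \<pi> t w * obs_Y Y A t w"
      by (simp add: obs_Y_def mult_ac)
  qed
  qed
  also have "\<dots> = ipw \<pi>" by (simp add: ipw_def)
  finally show ?thesis .
qed

end

theorem lemma1:
  fixes M :: "'w measure" and SM :: "'s measure"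
    and T :: nat and d :: "nat \<Rightarrow> nat"
    and Y :: "nat \<Rightarrow> nat list \<Rightarrow> 'w \<Rightarrow> real"
    and S :: "nat \<Rightarrow> nat list \<Rightarrow> 'w \<Rightarrow> 's"
    and A :: "nat \<Rightarrow> 'w \<Rightarrow> nat"
    and Pol :: "nat \<Rightarrow> ('s hist \<Rightarrow> nat) set"
    and \<pi>B :: "nat \<Rightarrow> 's hist \<Rightarrow> nat"
    and QB :: "nat \<Rightarrow> 's hist \<times> nat \<Rightarrow> real"
  assumes "prob_space M"
    and "1 \<le> T"
    and "\<forall>t\<in>{1..T}. 2 \<le> d t"
    and "\<forall>t\<in>{1..T}. A t \<in> measurable M (count_space UNIV) \<and> (\<forall>\<omega>\<in>space M. A t \<omega> < d t)"
    and "\<forall>t\<in>{1..T}. \<forall>as\<in>act_seqs d (t - 1). S t as \<in> measurable M SM"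
    and "\<forall>t\<in>{1..T}. \<forall>as\<in>act_seqs d t. integrable M (Y t as)"
    and "\<forall>t\<in>{1..T}. Pol t \<subseteq> {p. policy SM d t p}"
    and "seq_ignorability M SM d Y S A T"
    and "overlap M SM S A T Pol"
    and "correct_spec M SM Y S A T Pol"
    and "backward_induction M SM Y S A T Pol \<pi>B QB"
  shows "\<forall>\<pi>. (\<forall>t\<in>{1..T}. \<pi> t \<in> Pol t) \<longrightarrow> welfare M d Y S T \<pi> \<le> welfare M d Y S T \<pi>B"
proof -
  obtain \<eta> :: real where eta: "0 < \<eta>" and ov: "\<forall>t\<in>{1..T}. \<forall>a. AE \<omega> in M.
           (\<exists>p\<in>Pol t. p (obs_hist S A t \<omega>) = a) \<longrightarrow>
           \<eta> \<le> real_cond_exp M (H_alg M SM S A t) (indicator {x\<in>space M. A t x = a}) \<omega>"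
    using assms(9) unfolding overlap_def by blast
  interpret dtr M SM T d Y S A Pol \<eta>
  proof (rule dtr.intro)
    show "prob_space M" by (rule assms(1))
    show "1 \<le> T" by (rule assms(2))
    show "\<And>t. t \<in> {1..T} \<Longrightarrow> A t \<in> measurable M (count_space UNIV)" using assms(4) by auto
    show "\<And>t w. t \<in> {1..T} \<Longrightarrow> w \<in> space M \<Longrightarrow> A t w < d t" using assms(4) by auto
    show "\<And>t as. t \<in> {1..T} \<Longrightarrow> as \<in> act_seqs d (t - 1) \<Longrightarrow> S t as \<in> measurable M SM" using assms(5) by auto
    show "\<And>t as. t \<in> {1..T} \<Longrightarrow> as \<in> act_seqs d t \<Longrightarrow> integrable M (Y t as)" using assms(6) by auto
    show "\<And>t. t \<in> {1..T} \<Longrightarrow> Pol t \<subseteq> {p. policy SM d t p}" using assms(7) by auto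
    show "0 < \<eta>" by (rule eta)
    show "\<And>t a. t \<in> {1..T} \<Longrightarrow> AE w in M. (\<exists>p\<in>Pol t. p (obs_hist S A t w) = a) \<longrightarrow>
           \<eta> \<le> real_cond_exp M (H_alg M SM S A t) (indicator {x\<in>space M. A t x = a}) w" using ov by auto
    show "seq_ignorability M SM d Y S A T" by (rule assms(8))
  qed
  obtain \<pi>s Qs where \<pi>s: "\<forall>t\<in>{2..T}. \<pi>s t \<in> Pol t" and Qs: "Q_family M SM Y S A T \<pi>s Qs"
    and opt: "\<forall>t\<in>{2..T}. AE \<omega> in M. \<forall>p\<in>Pol t.
            Qs t (obs_hist S A t \<omega>, p (obs_hist S A t \<omega>)) \<le> Qs t (obs_hist S A t \<omega>, \<pi>s t (obs_hist S A t \<omega>))"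
    using assms(10) unfolding correct_spec_def by blast
  have QB: "Q_family M SM Y S A T \<pi>B QB" and \<pi>B: "\<forall>t\<in>{1..T}. \<pi>B t \<in> Pol t"
    and bi: "\<forall>t\<in>{1..T}. \<forall>p\<in>Pol t. (\<integral>\<omega>. QB t (obs_hist S A t \<omega>, p (obs_hist S A t \<omega>)) \<partial>M)
                   \<le> (\<integral>\<omega>. QB t (obs_hist S A t \<omega>, \<pi>B t (obs_hist S A t \<omega>)) \<partial>M)"
    using assms(11) unfolding backward_induction_def by auto
  show ?thesis
  proof (intro allI impI)
    fix \<pi> assume \<pi>: "\<forall>t\<in>{1..T}. \<pi> t \<in> Pol t"
    have "welfare M d Y S T \<pi> = ipw \<pi>" by (rule welfare_ipw[OF \<pi>])
    also have "\<dots> \<le> ipw \<pi>B" by (rule ipw_le[OF \<pi>s Qs opt \<pi>B QB bi \<pi>])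
    also have "\<dots> = welfare M d Y S T \<pi>B" by (rule welfare_ipw[OF \<pi>B, symmetric])
    finally show "welfare M d Y S T \<pi> \<le> welfare M d Y S T \<pi>B" .
  qed
qed


end
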